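(* In the Fock representation, the $Q^+$-operator $Q^+(v)=\sum_{r\ge0}Q^+_rv^r$ is invertible (as a formal power series in $v$ with coefficients in $\mathrm{End}\,\mathcal F^n$) and $$Q^+(v)^{-1}=\sum_{r\ge0}v^r\det\big((-1)^{1-i+j}Q^+_{1-i+j}\big)_{1\le i,j\le r},$$ where $Q^+_s:=0$ for $s<0$ and $Q^+_0=1$. Moreover, for $r<n$ these coefficients simplify to $\det\big((-1)^{1-i+j}Q^+_{1-i+j}\big)_{1\le i,j\le r}=q^{-2r}Q^-_r$.
   Context: $q$ is an indeterminate, $n\ge1$, $z$ a parameter, $(q^2)_m=\prod_{j=1}^m(1-q^{2j})$. Fock space $\mathcal F^n$: basis $|\lambda\rangle$ indexed by partitions with at most $n$ parts, $m_j(\lambda)=\lambda_j-\lambda_{j+1}$ ($\lambda_{n+1}=0$) particles at site $j$; $\beta_j^*$ adds a particle at site $j$ with factor $(1-q^{2m_j(\lambda)+2})$, $\beta_j$ removes a particle at site $j$ (giving $0$ if none), $q^{N_j}|\lambda\rangle=q^{m_j(\lambda)}|\lambda\rangle$. The commuting operators $Q^\pm_r$ are $$Q^+_r=(-1)^r\sum_{\alpha}z^{\alpha_n}\frac{(\beta_1^* )^{\alpha_n}(\beta_1\beta_2^* )^{\alpha_1}\cdots(\beta_{n-1}\beta_n^* )^{\alpha_{n-1}}\beta_n^{\alpha_n}}{(q^2)_{\alpha_1}\cdots(q^2)_{\alpha_n}},\quad Q^-_r=\sum_{\alpha}z^{\alpha_n}\frac{\beta_n^{\alpha_n}(\beta_{n-1}\beta_n^*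 )^{\alpha_{n-1}}\cdots(\beta_1\beta_2^* )^{\alpha_1}(\beta_1^* )^{\alpha_n}}{(q^2)_{\alpha_1}\cdots(q^2)_{\alpha_n}}\prod_{i=1}^nq^{\alpha_i(\alpha_i+1)},$$ sums over compositions $\alpha\in\mathbb Z^n_{\ge0}$ of $r$. *)

theory Defs
  imports "HOL-Combinatorics.Permutations"
begin

text \<open>Basis states of the Fock space: occupation vectors m, where m j is the
number of particles at site j (1 \<le> j \<le> n).  A partition with at most n parts
corresponds to m j = lambda_j - lambda_(j+1); this is a bijection.\<close>

type_synonym state = "nat \<Rightarrow> nat"
type_synonym 'a vect = "state \<Rightarrow> 'a"
text \<open>An operator is given by its action on basis vectors:
  A m mu = coefficient of |mu> in A|m>.\<close>
type_synonym 'a oper = "state \<Rightarrow> 'a vect"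

definition fock :: "nat \<Rightarrow> state set" where
  "fock n = {m. m 0 = 0 \<and> (\<forall>j>n. m j = 0)}"

definition vsupp :: "'a::zero vect \<Rightarrow> state set" where
  "vsupp v = {mu. v mu \<noteq> 0}"

definition apply_op :: "'a::comm_ring_1 oper \<Rightarrow> 'a vect \<Rightarrow> 'a vect" where
  "apply_op A v = (\<lambda>mu. \<Sum>nu\<in>vsupp v. v nu * A nu mu)"

definition comp_op :: "'a::comm_ring_1 oper \<Rightarrow> 'a oper \<Rightarrow> 'a oper" where
  "comp_op A B = (\<lambda>m. apply_op A (B m))"

definition id_op :: "'a::comm_ring_1 oper" where
  "id_op = (\<lambda>m mu. if mu = m then 1 else 0)"

definition zero_op :: "'a::comm_ring_1 oper" where
  "zero_op = (\<lambda>m mu. 0)"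

definition scale_op :: "'a::comm_ring_1 \<Rightarrow> 'a oper \<Rightarrow> 'a oper" where
  "scale_op c A = (\<lambda>m mu. c * A m mu)"

primrec pow_op :: "'a::comm_ring_1 oper \<Rightarrow> nat \<Rightarrow> 'a oper" where
  "pow_op A 0 = id_op"
| "pow_op A (Suc k) = comp_op A (pow_op A k)"

definition prod_op :: "(nat \<Rightarrow> 'a::comm_ring_1 oper) \<Rightarrow> nat list \<Rightarrow> 'a oper" where
  "prod_op F is = foldr (\<lambda>i acc. comp_op (F i) acc) is id_op"

definition bstar :: "'a::comm_ring_1 \<Rightarrow> nat \<Rightarrow> 'a oper" where
  "bstar q j = (\<lambda>m mu. if mu = m(j := Suc (m j)) then 1 - q ^ (2 * m j + 2) else 0)"

definition bann :: "nat \<Rightarrow> 'a::comm_ring_1 oper" where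
  "bann j = (\<lambda>m mu. if 0 < m j \<and> mu = m(j := m j - 1) then 1 else 0)"

definition qpoch :: "'a::comm_ring_1 \<Rightarrow> nat \<Rightarrow> 'a" where
  "qpoch q m = (\<Prod>j=1..m. 1 - q ^ (2 * j))"

definition comps :: "nat \<Rightarrow> nat \<Rightarrow> (nat \<Rightarrow> nat) set" where
  "comps n r = {\<alpha>. (\<forall>i. (i = 0 \<or> n < i) \<longrightarrow> \<alpha> i = 0) \<and> (\<Sum>i=1..n. \<alpha> i) = r}"

definition Qplus :: "nat \<Rightarrow> 'a::field \<Rightarrow> 'a \<Rightarrow> nat \<Rightarrow> 'a oper" where
  "Qplus n q z r = (\<lambda>m mu. (-1) ^ r * (\<Sum>\<alpha>\<in>comps n r.
      z ^ \<alpha> n / (\<Prod>i=1..n. qpoch q (\<alpha> i)) *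
      comp_op (pow_op (bstar q 1) (\<alpha> n))
        (comp_op (prod_op (\<lambda>i. pow_op (comp_op (bann i) (bstar q (Suc i))) (\<alpha> i)) [1..<n])
           (pow_op (bann n) (\<alpha> n))) m mu))"

definition Qminus :: "nat \<Rightarrow> 'a::field \<Rightarrow> 'a \<Rightarrow> nat \<Rightarrow> 'a oper" where
  "Qminus n q z r = (\<lambda>m mu. (\<Sum>\<alpha>\<in>comps n r.
      z ^ \<alpha> n / (\<Prod>i=1..n. qpoch q (\<alpha> i)) * (\<Prod>i=1..n. q ^ (\<alpha> i * (\<alpha> i + 1))) *
      comp_op (pow_op (bann n) (\<alpha> n))
        (comp_op (prod_op (\<lambda>i. pow_op (comp_op (bann i) (bstar q (Suc i))) (\<alpha> i)) (rev [1..<n]))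
           (pow_op (bstar q 1) (\<alpha> n))) m mu))"

definition Qplus_int :: "nat \<Rightarrow> 'a::field \<Rightarrow> 'a \<Rightarrow> int \<Rightarrow> 'a oper" where
  "Qplus_int n q z s = (if s < 0 then zero_op else Qplus n q z (nat s))"

text \<open>Leibniz determinant of an r x r matrix E (indices 1..r) with entries in
End F^n, products taken in row order (entries here commute).\<close>
definition det_op :: "nat \<Rightarrow> (nat \<Rightarrow> nat \<Rightarrow> 'a::comm_ring_1 oper) \<Rightarrow> 'a oper" where
  "det_op r E = (\<lambda>m mu. \<Sum>\<sigma>\<in>{\<sigma>. \<sigma> permutes {1..r}}.
      of_int (sign \<sigma>) * prod_op (\<lambda>i. E i (\<sigma> i)) [1..<Suc r] m mu)"

definition Dcoef :: "nat \<Rightarrow> 'a::field \<Rightarrow> 'a \<Rightarrow> nat \<Rightarrow> 'a oper" where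
  "Dcoef n q z r = det_op r (\<lambda>i j. let s = 1 - int i + int j in
      scale_op ((-1) ^ nat s) (Qplus_int n q z s))"

text \<open>Coefficient of v^r in the product of two formal power series in v
with coefficients in End F^n.\<close>
definition conv_op :: "(nat \<Rightarrow> 'a::comm_ring_1 oper) \<Rightarrow> (nat \<Rightarrow> 'a oper) \<Rightarrow> nat \<Rightarrow> 'a oper" where
  "conv_op A B r = (\<lambda>m mu. \<Sum>k=0..r. comp_op (A k) (B (r - k)) m mu)"

end

theory Submission
  imports Defs
begin


definition finitary :: "'a::comm_ring_1 oper \<Rightarrow> bool" where
  "finitary A = (\<forall>m. finite (vsupp (A m)))"

definition ws :: "(state \<Rightarrow> state) \<Rightarrow> (state \<Rightarrow> 'a) \<Rightarrow> 'a::comm_ring_1 oper" where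
  "ws s c = (\<lambda>m mu. if mu = s m then c m else 0)"

lemma apply_op_superset:
  assumes "finite F" "vsupp v \<subseteq> F"
  shows "apply_op A v mu = (\<Sum>nu\<in>F. v nu * A nu mu)"
  unfolding apply_op_def
  by (rule sum.mono_neutral_left) (use assms in \<open>auto simp: vsupp_def\<close>)

lemma apply_op_delta: "apply_op A (\<lambda>mu. if mu = t then c else 0) mu0 = c * A t mu0"
  by (subst apply_op_superset[of "{t}"]) (auto simp: vsupp_def)

lemma apply_op_scale:
  fixes c :: "'a::field"
  shows "apply_op A (\<lambda>mu. c * v mu) mu0 = c * apply_op A v mu0"
proof (cases "c = 0")
  case True then show ?thesis by (simp add: apply_op_def vsupp_def)
next
  case False
  then have "vsupp (\<lambda>mu. c * v mu) = vsupp v" by (auto simp: vsupp_def)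
  then show ?thesis by (simp add: apply_op_def sum_distrib_left mult.assoc)
qed

lemma apply_op_zero: "apply_op A (\<lambda>mu. 0) mu0 = 0"
  by (simp add: apply_op_def vsupp_def)

lemma apply_op_sum:
  assumes "finite X" "\<And>x. x \<in> X \<Longrightarrow> finite (vsupp (v x))"
  shows "apply_op A (\<lambda>mu. \<Sum>x\<in>X. c x * v x mu) mu0 = (\<Sum>x\<in>X. c x * apply_op A (v x) mu0)"
proof -
  define F where "F = (\<Union>x\<in>X. vsupp (v x))"
  have fF: "finite F" using assms by (simp add: F_def)
  have s1: "vsupp (\<lambda>mu. \<Sum>x\<in>X. c x * v x mu) \<subseteq> F"
  proof
    fix mu assume "mu \<in> vsupp (\<lambda>mu. \<Sum>x\<in>X. c x * v x mu)"
    then have "(\<Sum>x\<in>X. c x * v x mu) \<noteq> 0" by (simp add: vsupp_def)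
    then obtain x where "x \<in> X" "c x * v x mu \<noteq> 0" by (meson sum.neutral)
    moreover then have "v x mu \<noteq> 0" by auto
    ultimately show "mu \<in> F" by (auto simp: F_def vsupp_def)
  qed
  have "apply_op A (\<lambda>mu. \<Sum>x\<in>X. c x * v x mu) mu0 = (\<Sum>nu\<in>F. (\<Sum>x\<in>X. c x * v x nu) * A nu mu0)"
    by (rule apply_op_superset[OF fF s1])
  also have "\<dots> = (\<Sum>x\<in>X. c x * (\<Sum>nu\<in>F. v x nu * A nu mu0))"
    by (simp add: sum_distrib_left sum_distrib_right mult.assoc sum.swap[of _ F])
  also have "\<dots> = (\<Sum>x\<in>X. c x * apply_op A (v x) mu0)"
    by (rule sum.cong[OF refl]) (subst apply_op_superset[OF fF], auto simp: F_def)
  finally show ?thesis .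
qed

lemma apply_op_sum_left:
  "apply_op (\<lambda>m mu. \<Sum>x\<in>X. c x * F x m mu) v mu0 = (\<Sum>x\<in>X. c x * apply_op (F x) v mu0)"
  unfolding apply_op_def
  by (simp add: sum_distrib_left sum.swap[of _ X] mult.left_commute)

lemma comp_ws_right: "comp_op A (ws s c) m mu = c m * A (s m) mu"
  unfolding comp_op_def ws_def
  by (simp add: apply_op_delta)

lemma comp_ws_ws: "comp_op (ws s1 c1) (ws s2 c2) = ws (s1 \<circ> s2) (\<lambda>m. c2 m * c1 (s2 m))"
  apply (rule ext)+ apply (subst comp_ws_right) by (simp add: ws_def)

lemma id_ws: "id_op = ws id (\<lambda>_. 1)"
  by (auto simp: fun_eq_iff id_op_def ws_def)

lemma comp_id_right: "comp_op A id_op = A"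
  by (simp add: fun_eq_iff id_ws comp_ws_right)

lemma finite_vsupp_comp:
  assumes "finite (vsupp v)"
  shows "apply_op id_op v = v"
proof
  fix mu
  show "apply_op id_op v mu = v mu"
    by (subst apply_op_superset[of "insert mu (vsupp v)"]) (use assms in \<open>auto simp: id_op_def if_distrib cong: if_cong\<close>)
qed

lemma comp_id_left: "finite (vsupp (A m)) \<Longrightarrow> comp_op id_op A m = A m"
  by (simp add: comp_op_def finite_vsupp_comp)

lemma comp_zero_left: "comp_op zero_op A = zero_op"
  by (simp add: fun_eq_iff comp_op_def apply_op_def zero_op_def)

lemma comp_zero_right: "comp_op A zero_op = zero_op"
  by (simp add: fun_eq_iff comp_op_def apply_op_def zero_op_def vsupp_def)

lemma comp_scale_left: "comp_op (scale_op c A) B m mu = c * comp_op A B m mu"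
  by (simp add: comp_op_def apply_op_def scale_op_def sum_distrib_left mult.left_commute)

lemma comp_scale_right: "comp_op (A::'a::field oper) (scale_op c B) m mu = c * comp_op A B m mu"
  by (simp add: comp_op_def scale_op_def apply_op_scale)

lemma vsupp_apply:
  assumes "finite (vsupp v)" "finitary A"
  shows "finite (vsupp (apply_op A v))"
proof -
  have "vsupp (apply_op A v) \<subseteq> (\<Union>nu\<in>vsupp v. vsupp (A nu))"
  proof
    fix mu assume "mu \<in> vsupp (apply_op A v)"
    then have "(\<Sum>nu\<in>vsupp v. v nu * A nu mu) \<noteq> 0" by (simp add: vsupp_def apply_op_def)
    then obtain nu where "nu \<in> vsupp v" "v nu * A nu mu \<noteq> 0" by (meson sum.neutral)
    then show "mu \<in> (\<Union>nu\<in>vsupp v. vsupp (A nu))" by (auto simp: vsupp_def)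
  qed
  then show ?thesis using assms by (auto simp: finitary_def intro: finite_subset)
qed

lemma finitary_comp: "finitary A \<Longrightarrow> finitary B \<Longrightarrow> finitary (comp_op A B)"
  by (simp add: finitary_def comp_op_def vsupp_apply)

lemma finitary_zero: "finitary zero_op"
  by (simp add: finitary_def zero_op_def vsupp_def)

lemma finitary_id: "finitary id_op"
  by (simp add: finitary_def id_op_def vsupp_def)

lemma finitary_ws: "finitary (ws s c)"
proof -
  have "vsupp (ws s c m) \<subseteq> {s m}" for m by (auto simp: ws_def vsupp_def)
  then show ?thesis by (auto simp: finitary_def intro: finite_subset)
qed

lemma finitary_scale: "finitary A \<Longrightarrow> finitary (scale_op c A)"
proof -
  assume "finitary A"
  moreover have "vsupp (scale_op c A m) \<subseteq> vsupp (A m)" for m by (auto simp: scale_op_def vsupp_def)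
  ultimately show ?thesis by (auto simp: finitary_def intro: finite_subset)
qed

lemma finitary_sum:
  assumes "finite X" "\<And>x. x \<in> X \<Longrightarrow> finitary (F x)"
  shows "finitary (\<lambda>m mu. \<Sum>x\<in>X. c x * F x m mu)"
proof -
  have sub: "vsupp (\<lambda>mu. \<Sum>x\<in>X. c x * F x m mu) \<subseteq> (\<Union>x\<in>X. vsupp (F x m))" for m
  proof
    fix mu assume "mu \<in> vsupp (\<lambda>mu. \<Sum>x\<in>X. c x * F x m mu)"
    then have "(\<Sum>x\<in>X. c x * F x m mu) \<noteq> 0" by (simp add: vsupp_def)
    then obtain x where "x \<in> X" "c x * F x m mu \<noteq> 0" by (meson sum.neutral)
    moreover then have "F x m mu \<noteq> 0" by auto
    ultimately show "mu \<in> (\<Union>x\<in>X. vsupp (F x m))" by (auto simp: vsupp_def)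
  qed
  have fin: "finite (\<Union>x\<in>X. vsupp (F x m))" for m using assms by (auto simp: finitary_def)
  show ?thesis unfolding finitary_def using sub fin by (blast intro: finite_subset)
qed

lemma comp_sum_right:
  assumes "finite X" "\<And>x. x \<in> X \<Longrightarrow> finitary (F x)"
  shows "comp_op A (\<lambda>m mu. \<Sum>x\<in>X. c x * F x m mu) m mu = (\<Sum>x\<in>X. c x * comp_op A (F x) m mu)"
  unfolding comp_op_def
  by (rule apply_op_sum) (use assms in \<open>auto simp: finitary_def\<close>)

lemma comp_sum_left:
  "comp_op (\<lambda>m mu. \<Sum>x\<in>X. c x * F x m mu) B m mu = (\<Sum>x\<in>X. c x * comp_op (F x) B m mu)"
  unfolding comp_op_def by (rule apply_op_sum_left)

lemma comp_assoc:
  assumes "finitary B" "finitary C"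
  shows "comp_op (comp_op A B) C = comp_op A (comp_op B C)"
proof (intro ext)
  fix m mu
  have fC: "finite (vsupp (C m))" using assms by (simp add: finitary_def)
  have "comp_op A (comp_op B C) m mu = apply_op A (\<lambda>w. \<Sum>nu\<in>vsupp (C m). C m nu * B nu w) mu"
    unfolding comp_op_def apply_op_def[of B "C m"] ..
  also have "\<dots> = (\<Sum>nu\<in>vsupp (C m). C m nu * apply_op A (B nu) mu)"
    by (rule apply_op_sum) (use assms fC in \<open>auto simp: finitary_def\<close>)
  also have "\<dots> = comp_op (comp_op A B) C m mu"
    unfolding comp_op_def apply_op_def[of "\<lambda>m. apply_op A (B m)" "C m"] ..
  finally show "comp_op (comp_op A B) C m mu = comp_op A (comp_op B C) m mu" ..
qed


definition pp :: "'a::comm_ring_1 \<Rightarrow> nat \<Rightarrow> nat \<Rightarrow> 'a" where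
  "pp q x k = (\<Prod>t<k. 1 - q ^ (2 * (x + t) + 2))"

definition pr :: "nat \<Rightarrow> nat \<Rightarrow> nat" where
  "pr n i = (if i = 1 then n else i - 1)"

lemma ws_cong: "(\<And>m. s m = s' m) \<Longrightarrow> (\<And>m. c m = c' m) \<Longrightarrow> ws s c = ws s' c'"
  by (rule arg_cong2[where f=ws]) auto

lemma bstar_ws: "bstar q j = ws (\<lambda>m. m(j := Suc (m j))) (\<lambda>m. 1 - q ^ (2 * m j + 2))"
  by (rule ext)+ (simp add: bstar_def ws_def)

lemma bann_ws: "bann j = ws (\<lambda>m. m(j := m j - 1)) (\<lambda>m. if 0 < m j then 1 else 0)"
  by (rule ext)+ (auto simp add: bann_def ws_def)

lemma pow_bann: "pow_op (bann j) k = ws (\<lambda>m. m(j := m j - k)) (\<lambda>m. if k \<le> m j then 1 else 0)"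
proof (induction k)
  case 0 then show ?case by (simp add: id_ws) (rule ws_cong, auto)
next
  case (Suc k) then show ?case
    by (simp add: comp_ws_ws bann_ws) (rule ws_cong, auto)
qed

lemma pow_bstar: "pow_op (bstar q j) k = ws (\<lambda>m. m(j := m j + k)) (\<lambda>m. pp q (m j) k)"
proof (induction k)
  case 0 then show ?case by (simp add: id_ws pp_def) (rule ws_cong, auto)
next
  case (Suc k) then show ?case
    by (simp add: comp_ws_ws bstar_ws) (rule ws_cong, auto simp: pp_def)
qed

lemma hop_ws: "comp_op (bann i) (bstar q (Suc i)) =
   ws (\<lambda>m. m(Suc i := Suc (m (Suc i)), i := m i - 1)) (\<lambda>m. (1 - q ^ (2 * m (Suc i) + 2)) * (if 0 < m i then 1 else 0))"
  by (simp add: comp_ws_ws bstar_ws bann_ws) (rule ws_cong, auto)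

lemma pow_hop: "pow_op (comp_op (bann i) (bstar q (Suc i))) k =
   ws (\<lambda>m. m(i := m i - k, Suc i := m (Suc i) + k)) (\<lambda>m. (if k \<le> m i then 1 else 0) * pp q (m (Suc i)) k)"
proof (induction k)
  case 0 then show ?case by (simp add: id_ws pp_def) (rule ws_cong, auto)
next
  case (Suc k) show ?case
    unfolding pow_op.simps(2) Suc unfolding hop_ws comp_ws_ws by (rule ws_cong) (auto simp: pp_def)
qed

lemma prod_op_Nil[simp]: "prod_op F [] = id_op"
  by (simp add: prod_op_def)

lemma prod_op_Cons[simp]: "prod_op F (x # xs) = comp_op (F x) (prod_op F xs)"
  by (simp add: prod_op_def)

lemma comp_assoc_ws:
  fixes A :: "'a::field oper"
  shows "comp_op (comp_op A B) (ws s c) = comp_op A (comp_op B (ws s c))"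
proof (intro ext)
  fix m mu
  have eq: "comp_op B (ws s c) m = (\<lambda>mu. c m * B (s m) mu)"
    by (rule ext) (simp add: comp_ws_right)
  have "comp_op (comp_op A B) (ws s c) m mu = c m * comp_op A B (s m) mu" by (rule comp_ws_right)
  also have "\<dots> = c m * apply_op A (B (s m)) mu" by (simp add: comp_op_def)
  also have "\<dots> = apply_op A (\<lambda>mu. c m * B (s m) mu) mu" by (simp add: apply_op_scale)
  also have "\<dots> = comp_op A (comp_op B (ws s c)) m mu" by (simp only: comp_op_def[of A] eq)
  finally show "comp_op (comp_op A B) (ws s c) m mu = comp_op A (comp_op B (ws s c)) m mu" .
qed

abbreviation Fp :: "'a::field \<Rightarrow> (nat \<Rightarrow> nat) \<Rightarrow> nat \<Rightarrow> 'a oper" where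
  "Fp q \<alpha> \<equiv> (\<lambda>i. pow_op (comp_op (bann i) (bstar q (Suc i))) (\<alpha> i))"

definition sigR :: "nat \<Rightarrow> (nat \<Rightarrow> nat) \<Rightarrow> nat \<Rightarrow> state \<Rightarrow> state" where
  "sigR n \<alpha> j m = (\<lambda>i. if j \<le> i \<and> i \<le> n then m i - \<alpha> i + (if j < i then \<alpha> (i - 1) else 0) else m i)"

definition kapR :: "'a::comm_ring_1 \<Rightarrow> nat \<Rightarrow> (nat \<Rightarrow> nat) \<Rightarrow> nat \<Rightarrow> state \<Rightarrow> 'a" where
  "kapR q n \<alpha> j m = (if \<alpha> n \<le> m n then 1 else 0) *
     (\<Prod>i\<in>{j..<n}. (if \<alpha> i \<le> m i then 1 else 0) * pp q (m (Suc i) - \<alpha> (Suc i)) (\<alpha> i))"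

lemma RP_aux:
  fixes q :: "'a::field"
  shows "n - j = d \<Longrightarrow> 1 \<le> j \<Longrightarrow> j \<le> n \<Longrightarrow>
    comp_op (prod_op (Fp q \<alpha>) [j..<n]) (pow_op (bann n) (\<alpha> n)) = ws (sigR n \<alpha> j) (kapR q n \<alpha> j)"
proof (induction d arbitrary: j)
  case 0
  then have "j = n" by simp
  then show ?case
    by (simp add: pow_bann id_ws comp_ws_ws) (rule ws_cong, auto simp: sigR_def kapR_def)
next
  case (Suc d)
  then have jn: "j < n" by simp
  have IH: "comp_op (prod_op (Fp q \<alpha>) [Suc j..<n]) (pow_op (bann n) (\<alpha> n)) = ws (sigR n \<alpha> (Suc j)) (kapR q n \<alpha> (Suc j))"
    using Suc by simp
  have "comp_op (prod_op (Fp q \<alpha>) [j..<n]) (pow_op (bann n) (\<alpha> n)) =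
     comp_op (Fp q \<alpha> j) (ws (sigR n \<alpha> (Suc j)) (kapR q n \<alpha> (Suc j)))"
    unfolding upt_conv_Cons[OF jn] prod_op_Cons pow_bann comp_assoc_ws
    unfolding pow_bann[symmetric] IH ..
  also have "\<dots> = ws (sigR n \<alpha> j) (kapR q n \<alpha> j)"
    unfolding pow_hop comp_ws_ws
  proof (rule ws_cong)
    fix m
    show "((\<lambda>m. m(j := m j - \<alpha> j, Suc j := m (Suc j) + \<alpha> j)) \<circ> sigR n \<alpha> (Suc j)) m = sigR n \<alpha> j m"
      using jn by (auto simp: sigR_def fun_eq_iff)
    have e: "{j..<n} = insert j {Suc j..<n}" using jn by auto
    show "kapR q n \<alpha> (Suc j) m * ((if \<alpha> j \<le> sigR n \<alpha> (Suc j) m j then 1 else 0) * pp q (sigR n \<alpha> (Suc j) m (Suc j)) (\<alpha> j)) = kapR q n \<alpha> j m"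
      using jn by (simp add: kapR_def sigR_def e mult_ac)
  qed
  finally show ?case .
qed

lemma RP:
  fixes q :: "'a::field"
  shows "1 \<le> j \<Longrightarrow> j \<le> n \<Longrightarrow>
    comp_op (prod_op (Fp q \<alpha>) [j..<n]) (pow_op (bann n) (\<alpha> n)) = ws (sigR n \<alpha> j) (kapR q n \<alpha> j)"
  using RP_aux by blast

lemma pr_1[simp]: "pr n 1 = n" by (simp add: pr_def)
lemma pr_Suc0[simp]: "pr n (Suc 0) = n" by (simp add: pr_def)
lemma pr_Suc[simp]: "0 < i \<Longrightarrow> pr n (Suc i) = i" by (simp add: pr_def)

lemma prod_pr_split:
  assumes "1 \<le> n"
  shows "(\<Prod>i\<in>{1..n}. g i (\<alpha> (pr n i))) = g 1 (\<alpha> n) * (\<Prod>i\<in>{1..<n}. g (Suc i) (\<alpha> i))"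
proof -
  have e: "{1..n} = insert 1 {Suc 1..<Suc n}" using assms by auto
  have "(\<Prod>i\<in>{Suc 1..<Suc n}. g i (\<alpha> (pr n i))) = (\<Prod>i\<in>Suc ` {1..<n}. g i (\<alpha> (pr n i)))"
    by (simp add: image_Suc_atLeastLessThan)
  also have "\<dots> = (\<Prod>i\<in>{1..<n}. g (Suc i) (\<alpha> i))"
    by (subst prod.reindex) auto
  finally show ?thesis unfolding e by simp
qed

lemma prod_last_split:
  fixes n :: nat
  assumes "1 \<le> n"
  shows "(\<Prod>i\<in>{1..n}. f i) = (\<Prod>i\<in>{1..<n}. f i) * f n"
proof -
  have e: "{1..n} = insert n {1..<n}" using assms by auto
  show ?thesis unfolding e by (simp add: mult.commute)
qed

definition sigP :: "nat \<Rightarrow> (nat \<Rightarrow> nat) \<Rightarrow> state \<Rightarrow> state" where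
  "sigP n \<alpha> m = (\<lambda>i. if 1 \<le> i \<and> i \<le> n then m i - \<alpha> i + \<alpha> (pr n i) else m i)"

definition kapP :: "'a::comm_ring_1 \<Rightarrow> nat \<Rightarrow> (nat \<Rightarrow> nat) \<Rightarrow> state \<Rightarrow> 'a" where
  "kapP q n \<alpha> m = (\<Prod>i\<in>{1..n}. (if \<alpha> i \<le> m i then 1 else 0) * pp q (m i - \<alpha> i) (\<alpha> (pr n i)))"

lemma MP:
  fixes q :: "'a::field"
  assumes "1 \<le> n"
  shows "comp_op (pow_op (bstar q 1) (\<alpha> n)) (comp_op (prod_op (Fp q \<alpha>) [1..<n]) (pow_op (bann n) (\<alpha> n)))
     = ws (sigP n \<alpha>) (kapP q n \<alpha>)"
  unfolding RP[OF order_refl assms] pow_bstar comp_ws_ws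
proof (rule ws_cong)
  fix m
  show "((\<lambda>m. m(1 := m 1 + \<alpha> n)) \<circ> sigR n \<alpha> 1) m = sigP n \<alpha> m"
    using assms by (auto simp: sigR_def sigP_def fun_eq_iff pr_def)
  have A: "(\<Prod>i\<in>{1..n}. (if \<alpha> i \<le> m i then 1 else 0)) = (\<Prod>i\<in>{1..<n}. (if \<alpha> i \<le> m i then 1 else 0)) * (if \<alpha> n \<le> m n then (1::'a) else 0)"
    by (rule prod_last_split[OF assms])
  have B: "(\<Prod>i\<in>{1..n}. pp q (m i - \<alpha> i) (\<alpha> (pr n i))) = pp q (m 1 - \<alpha> 1) (\<alpha> n) * (\<Prod>i\<in>{1..<n}. pp q (m (Suc i) - \<alpha> (Suc i)) (\<alpha> i))"
    by (rule prod_pr_split[OF assms])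
  have s1: "sigR n \<alpha> 1 m 1 = m 1 - \<alpha> 1" using assms by (simp add: sigR_def)
  show "kapR q n \<alpha> 1 m * pp q (sigR n \<alpha> 1 m 1) (\<alpha> n) = kapP q n \<alpha> m"
    unfolding kapP_def kapR_def prod.distrib A B s1 by (simp only: mult_ac)
qed

definition sigR' :: "nat \<Rightarrow> (nat \<Rightarrow> nat) \<Rightarrow> nat \<Rightarrow> state \<Rightarrow> state" where
  "sigR' n \<alpha> j m = (\<lambda>i. if 1 \<le> i \<and> i < j then m i + \<alpha> (pr n i) - \<alpha> i else if i = j then m j + \<alpha> (pr n j) else m i)"

definition kapR' :: "'a::comm_ring_1 \<Rightarrow> nat \<Rightarrow> (nat \<Rightarrow> nat) \<Rightarrow> nat \<Rightarrow> state \<Rightarrow> 'a" where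
  "kapR' q n \<alpha> j m = pp q (m 1) (\<alpha> n) *
     (\<Prod>i\<in>{1..<j}. (if \<alpha> i \<le> m i + \<alpha> (pr n i) then 1 else 0) * pp q (m (Suc i)) (\<alpha> i))"

lemma RM:
  fixes q :: "'a::field"
  shows "1 \<le> j \<Longrightarrow> j \<le> n \<Longrightarrow>
    comp_op (prod_op (Fp q \<alpha>) (rev [1..<j])) (pow_op (bstar q 1) (\<alpha> n)) = ws (sigR' n \<alpha> j) (kapR' q n \<alpha> j)"
proof (induction j rule: nat_induct_at_least)
  case base
  then show ?case
    by (simp add: pow_bstar id_ws comp_ws_ws) (rule ws_cong, auto simp: sigR'_def kapR'_def)
next
  case (Suc j)
  then have jn: "j < n" "1 \<le> j" by auto
  have rv: "rev [1..<Suc j] = j # rev [1..<j]" using jn by simp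
  have IH: "comp_op (prod_op (Fp q \<alpha>) (rev [1..<j])) (pow_op (bstar q 1) (\<alpha> n)) = ws (sigR' n \<alpha> j) (kapR' q n \<alpha> j)"
    using Suc by simp
  have "comp_op (prod_op (Fp q \<alpha>) (rev [1..<Suc j])) (pow_op (bstar q 1) (\<alpha> n)) =
     comp_op (Fp q \<alpha> j) (ws (sigR' n \<alpha> j) (kapR' q n \<alpha> j))"
    using jn unfolding rv prod_op_Cons pow_bstar comp_assoc_ws
    unfolding pow_bstar[symmetric] IH by simp
  also have "\<dots> = ws (sigR' n \<alpha> (Suc j)) (kapR' q n \<alpha> (Suc j))"
    unfolding pow_hop comp_ws_ws
  proof (rule ws_cong)
    fix m
    show "((\<lambda>m. m(j := m j - \<alpha> j, Suc j := m (Suc j) + \<alpha> j)) \<circ> sigR' n \<alpha> j) m = sigR' n \<alpha> (Suc j) m"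
      using jn by (auto simp: sigR'_def fun_eq_iff)
    show "kapR' q n \<alpha> j m * ((if \<alpha> j \<le> sigR' n \<alpha> j m j then 1 else 0) * pp q (sigR' n \<alpha> j m (Suc j)) (\<alpha> j)) = kapR' q n \<alpha> (Suc j) m"
      using jn by (simp add: kapR'_def sigR'_def mult_ac)
  qed
  finally show ?case .
qed

definition sigM :: "nat \<Rightarrow> (nat \<Rightarrow> nat) \<Rightarrow> state \<Rightarrow> state" where
  "sigM n \<alpha> m = (\<lambda>i. if 1 \<le> i \<and> i \<le> n then m i + \<alpha> (pr n i) - \<alpha> i else m i)"

definition kapM :: "'a::comm_ring_1 \<Rightarrow> nat \<Rightarrow> (nat \<Rightarrow> nat) \<Rightarrow> state \<Rightarrow> 'a" where
  "kapM q n \<alpha> m = (\<Prod>i\<in>{1..n}. (if \<alpha> i \<le> m i + \<alpha> (pr n i) then 1 else 0) * pp q (m i) (\<alpha> (pr n i)))"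

lemma MM:
  fixes q :: "'a::field"
  assumes "1 \<le> n"
  shows "comp_op (pow_op (bann n) (\<alpha> n)) (comp_op (prod_op (Fp q \<alpha>) (rev [1..<n])) (pow_op (bstar q 1) (\<alpha> n)))
     = ws (sigM n \<alpha>) (kapM q n \<alpha>)"
  unfolding RM[OF assms order_refl] pow_bann comp_ws_ws
proof (rule ws_cong)
  fix m
  show "((\<lambda>m. m(n := m n - \<alpha> n)) \<circ> sigR' n \<alpha> n) m = sigM n \<alpha> m"
    using assms by (auto simp: sigR'_def sigM_def fun_eq_iff)
  have A: "(\<Prod>i\<in>{1..n}. (if \<alpha> i \<le> m i + \<alpha> (pr n i) then 1 else 0)) = (\<Prod>i\<in>{1..<n}. (if \<alpha> i \<le> m i + \<alpha> (pr n i) then 1 else 0)) * (if \<alpha> n \<le> m n + \<alpha> (pr n n) then (1::'a) else 0)"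
    by (rule prod_last_split[OF assms])
  have B: "(\<Prod>i\<in>{1..n}. pp q (m i) (\<alpha> (pr n i))) = pp q (m 1) (\<alpha> n) * (\<Prod>i\<in>{1..<n}. pp q (m (Suc i)) (\<alpha> i))"
    by (rule prod_pr_split[OF assms])
  have s1: "sigR' n \<alpha> n m n = m n + \<alpha> (pr n n)" using assms by (simp add: sigR'_def)
  show "kapR' q n \<alpha> n m * (if \<alpha> n \<le> sigR' n \<alpha> n m n then 1 else 0) = kapM q n \<alpha> m"
    unfolding kapM_def kapR'_def prod.distrib A B s1 by (simp only: mult_ac)
qed


lemma prod_op_Nil'[simp]: "prod_op F [] = id_op"
  by (simp add: prod_op_def)

lemma prod_op_Cons'[simp]: "prod_op F (x # xs) = comp_op (F x) (prod_op F xs)"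
  by (simp add: prod_op_def)

lemma finitary_prod: "(\<And>x. x \<in> set xs \<Longrightarrow> finitary (F x)) \<Longrightarrow> finitary (prod_op F xs)"
  by (induction xs) (auto simp: finitary_id finitary_comp)

lemma prod_op_cong: "(\<And>x. x \<in> set xs \<Longrightarrow> F x = G x) \<Longrightarrow> prod_op F xs = prod_op G xs"
  by (induction xs) auto

lemma prod_op_zero: "x \<in> set xs \<Longrightarrow> F x = zero_op \<Longrightarrow> prod_op F xs = zero_op"
  by (induction xs) (auto simp: comp_zero_left comp_zero_right)

lemma permutes_remove_fix: "p permutes S \<Longrightarrow> p a = a \<Longrightarrow> p permutes (S - {a})"
  by (auto simp: permutes_def)

definition EE :: "(int \<Rightarrow> 'a::comm_ring_1 oper) \<Rightarrow> int \<Rightarrow> nat \<Rightarrow> nat \<Rightarrow> nat \<Rightarrow> 'a oper" where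
  "EE e t a i j = e (1 - int i + int j + (if i = a then t else 0))"

definition HH :: "(int \<Rightarrow> 'a::comm_ring_1 oper) \<Rightarrow> nat \<Rightarrow> nat \<Rightarrow> int \<Rightarrow> 'a oper" where
  "HH e a r t = (\<lambda>m mu. \<Sum>\<sigma>\<in>{\<sigma>. \<sigma> permutes {a..<a+r}}.
      of_int (sign \<sigma>) * prod_op (\<lambda>i. EE e t a i (\<sigma> i)) [a..<a+r] m mu)"

locale hess =
  fixes e :: "int \<Rightarrow> 'a::field oper"
  assumes e_neg: "\<And>s. s < 0 \<Longrightarrow> e s = zero_op"
    and e_0: "e 0 = id_op"
    and e_fin: "\<And>s. finitary (e s)"
begin

lemma finitary_HH: "finitary (HH e a r t)"
  unfolding HH_def
  by (rule finitary_sum) (auto intro!: finitary_prod simp: finite_permutations EE_def e_fin)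

lemma HH_0: "HH e a 0 t = id_op"
  by (rule ext)+ (simp add: HH_def)

lemma HH_rec:
  assumes r: "1 \<le> r"
  shows "HH e a r t m mu = comp_op (e (t+1)) (HH e (Suc a) (r-1) 0) m mu
           - (if 2 \<le> r then HH e (Suc a) (r-1) (t+1) m mu else 0)"
proof -
  define S where "S = {a..<a+r}"
  define S' where "S' = {Suc a..<a+r}"
  have S'S: "S' = S - {a}" by (auto simp: S_def S'_def)
  have aS: "a \<in> S" using r by (simp add: S_def)
  define P where "P = {\<sigma>. \<sigma> permutes S}"
  have finP: "finite P" by (simp add: P_def S_def finite_permutations)
  define f where "f \<sigma> = of_int (sign \<sigma>) * prod_op (\<lambda>i. EE e t a i (\<sigma> i)) [a..<a+r] m mu" for \<sigma>
  have HHf: "HH e a r t m mu = sum f P" by (simp add: HH_def f_def P_def S_def)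
  have split: "f \<sigma> = (if \<sigma> a = a then f \<sigma> else 0) + (if \<sigma> (Suc a) = a then f \<sigma> else 0)
      + (if \<sigma> a \<noteq> a \<and> \<sigma> (Suc a) \<noteq> a then f \<sigma> else 0)" if "\<sigma> \<in> P" for \<sigma>
  proof -
    have "inj \<sigma>" using that by (auto simp: P_def permutes_inj)
    then have "\<not> (\<sigma> a = a \<and> \<sigma> (Suc a) = a)" by (metis inj_eq n_not_Suc_n)
    then show ?thesis by auto
  qed
  have "sum f P = sum f {\<sigma>\<in>P. \<sigma> a = a} + sum f {\<sigma>\<in>P. \<sigma> (Suc a) = a} + sum f {\<sigma>\<in>P. \<sigma> a \<noteq> a \<and> \<sigma> (Suc a) \<noteq> a}"
    by (simp only: sum.cong[OF refl split] sum.distrib sum.inter_filter[OF finP])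
  moreover have "sum f {\<sigma>\<in>P. \<sigma> a \<noteq> a \<and> \<sigma> (Suc a) \<noteq> a} = 0"
  proof (rule sum.neutral, rule ballI)
    fix \<sigma> assume "\<sigma> \<in> {\<sigma>\<in>P. \<sigma> a \<noteq> a \<and> \<sigma> (Suc a) \<noteq> a}"
    then have sp: "\<sigma> permutes S" and n1: "\<sigma> a \<noteq> a" and n2: "\<sigma> (Suc a) \<noteq> a" by (auto simp: P_def)
    have "a \<in> \<sigma> ` S" using permutes_image[OF sp] aS by simp
    then obtain \<rho> where \<rho>: "\<rho> \<in> S" "\<sigma> \<rho> = a" by auto
    then have "\<rho> \<noteq> a" "\<rho> \<noteq> Suc a" using n1 n2 by auto
    then have "Suc (Suc a) \<le> \<rho>" using \<rho> by (auto simp: S_def)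
    then have "EE e t a \<rho> (\<sigma> \<rho>) = zero_op" using \<rho> by (auto simp: EE_def intro!: e_neg)
    then have "prod_op (\<lambda>i. EE e t a i (\<sigma> i)) [a..<a+r] = zero_op"
      by (rule prod_op_zero[rotated]) (use \<rho> in \<open>simp add: S_def\<close>)
    then show "f \<sigma> = 0" by (simp add: f_def zero_op_def)
  qed
  moreover have "sum f {\<sigma>\<in>P. \<sigma> a = a} = comp_op (e (t+1)) (HH e (Suc a) (r-1) 0) m mu"
  proof -
    have eqP: "{\<sigma>\<in>P. \<sigma> a = a} = {\<tau>. \<tau> permutes S'}"
    proof (rule set_eqI, rule iffI)
      fix \<sigma> assume "\<sigma> \<in> {\<sigma>\<in>P. \<sigma> a = a}"
      then show "\<sigma> \<in> {\<tau>. \<tau> permutes S'}" unfolding S'S P_def by (auto intro: permutes_remove_fix)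
    next
      fix \<tau> assume "\<tau> \<in> {\<tau>. \<tau> permutes S'}"
      then have tp: "\<tau> permutes S'" by simp
      then have "\<tau> permutes S" by (rule permutes_subset) (auto simp: S'S)
      moreover have "\<tau> a = a" using tp by (rule permutes_not_in) (simp add: S'S)
      ultimately show "\<tau> \<in> {\<sigma>\<in>P. \<sigma> a = a}" by (simp add: P_def)
    qed
    have ups: "[a..<a+r] = a # [Suc a..<a+r]" using r by (simp add: upt_conv_Cons)
    have "sum f {\<sigma>\<in>P. \<sigma> a = a} = (\<Sum>\<tau>\<in>{\<tau>. \<tau> permutes S'}. of_int (sign \<tau>) *
         comp_op (e (t+1)) (prod_op (\<lambda>i. EE e 0 (Suc a) i (\<tau> i)) [Suc a..<Suc a + (r-1)]) m mu)"
    proof (rule sum.cong[OF eqP])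
      fix \<tau> assume "\<tau> \<in> {\<tau>. \<tau> permutes S'}"
      then have ta: "\<tau> a = a" by (auto intro: permutes_not_in simp: S'_def)
      have pc: "prod_op (\<lambda>i. EE e t a i (\<tau> i)) [Suc a..<a+r] = prod_op (\<lambda>i. EE e 0 (Suc a) i (\<tau> i)) [Suc a..<Suc a + (r-1)]"
        using r by (auto intro!: prod_op_cong simp: EE_def)
      show "f \<tau> = of_int (sign \<tau>) * comp_op (e (t+1)) (prod_op (\<lambda>i. EE e 0 (Suc a) i (\<tau> i)) [Suc a..<Suc a + (r-1)]) m mu"
        unfolding f_def ups prod_op_Cons' pc by (simp add: EE_def ta add.commute)
    qed
    also have "\<dots> = comp_op (e (t+1)) (HH e (Suc a) (r-1) 0) m mu"
      unfolding HH_def S'_def using r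
      by (subst comp_sum_right) (auto simp: finite_permutations EE_def e_fin intro!: finitary_prod)
    finally show ?thesis .
  qed
  moreover have "sum f {\<sigma>\<in>P. \<sigma> (Suc a) = a} = - (if 2 \<le> r then HH e (Suc a) (r-1) (t+1) m mu else 0)"
  proof (cases "2 \<le> r")
    case False
    then have "r = 1" using r by simp
    have E: "{\<sigma>\<in>P. \<sigma> (Suc a) = a} = {}"
    proof (rule equals0I)
      fix \<sigma> assume "\<sigma> \<in> {\<sigma>\<in>P. \<sigma> (Suc a) = a}"
      then have "\<sigma> permutes S" "\<sigma> (Suc a) = a" by (auto simp: P_def)
      moreover have "Suc a \<notin> S" using \<open>r = 1\<close> by (simp add: S_def)
      ultimately show False using permutes_not_in by fastforce
    qed
    show ?thesis unfolding E using False by simp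
  next
    case True
    define tr where "tr = transpose a (Suc a)"
    have trS: "tr permutes S" unfolding tr_def using True by (intro permutes_swap_id) (auto simp: S_def)
    have ups: "[a..<a+r] = a # Suc a # [Suc (Suc a)..<a+r]" using True by (simp add: upt_conv_Cons)
    have ups': "[Suc a..<Suc a + (r-1)] = Suc a # [Suc (Suc a)..<a+r]" using True by (simp add: upt_conv_Cons)
    define g where "g \<tau> = - (of_int (sign \<tau>) * prod_op (\<lambda>i. EE e (t+1) (Suc a) i (\<tau> i)) [Suc a..<Suc a + (r-1)] m mu)" for \<tau>
    have key: "f (\<tau> \<circ> tr) = g \<tau>" if tp: "\<tau> permutes S'" for \<tau>
    proof -
      have tS: "\<tau> permutes S" using tp by (rule permutes_subset) (auto simp: S'S)
      have ta: "\<tau> a = a" using tp by (rule permutes_not_in) (simp add: S'S)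
      have sg: "sign (\<tau> \<circ> tr) = - sign \<tau>"
        using tS by (simp add: sign_compose permutes_imp_permutation[OF _ tS] S_def tr_def permutation_swap_id sign_swap_id)
      have fint: "finitary (prod_op (\<lambda>i. EE e (t+1) (Suc a) i (\<tau> i)) [Suc (Suc a)..<a+r])"
        by (auto intro!: finitary_prod simp: EE_def e_fin)
      have cid: "comp_op id_op X = X" if "finitary X" for X :: "'a oper"
        using that by (auto simp: fun_eq_iff comp_id_left finitary_def)
      have pc: "prod_op (\<lambda>i. EE e t a i ((\<tau> \<circ> tr) i)) [Suc (Suc a)..<a+r] = prod_op (\<lambda>i. EE e (t+1) (Suc a) i (\<tau> i)) [Suc (Suc a)..<a+r]"
        by (auto intro!: prod_op_cong simp: EE_def tr_def)
      have E1: "EE e t a a ((\<tau> \<circ> tr) a) = EE e (t+1) (Suc a) (Suc a) (\<tau> (Suc a))"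
        unfolding EE_def tr_def by (simp add: algebra_simps)
      have E2: "EE e t a (Suc a) ((\<tau> \<circ> tr) (Suc a)) = id_op"
        using ta by (simp add: EE_def tr_def e_0)
      show "f (\<tau> \<circ> tr) = g \<tau>"
        unfolding f_def g_def ups ups' prod_op_Cons' sg E1 E2 pc cid[OF fint] by (simp only: of_int_minus mult_minus_left)
    qed
    have "sum f {\<sigma>\<in>P. \<sigma> (Suc a) = a} = sum g {\<tau>. \<tau> permutes S'}"
    proof (rule sum.reindex_bij_witness[where i="\<lambda>\<tau>. \<tau> \<circ> tr" and j="\<lambda>\<sigma>. \<sigma> \<circ> tr"])
      fix \<tau> assume "\<tau> \<in> {\<tau>. \<tau> permutes S'}"
      then have tp: "\<tau> permutes S'" by simp
      then have tS: "\<tau> permutes S" by (rule permutes_subset) (auto simp: S'S)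
      have ta: "\<tau> a = a" using tp by (rule permutes_not_in) (simp add: S'S)
      show "\<tau> \<circ> tr \<circ> tr = \<tau>" by (rule ext) (simp add: tr_def)
      show "\<tau> \<circ> tr \<in> {\<sigma>\<in>P. \<sigma> (Suc a) = a}"
        using permutes_compose[OF trS tS] ta by (simp add: P_def tr_def)
    next
      fix \<sigma> assume "\<sigma> \<in> {\<sigma>\<in>P. \<sigma> (Suc a) = a}"
      then have sp: "\<sigma> permutes S" and sa: "\<sigma> (Suc a) = a" by (auto simp: P_def)
      have sst: "\<sigma> \<circ> tr \<circ> tr = \<sigma>" by (rule ext) (simp add: tr_def)
      then show "\<sigma> \<circ> tr \<circ> tr = \<sigma>" .
      have "\<sigma> \<circ> tr permutes S" by (rule permutes_compose[OF trS sp])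
      moreover have "(\<sigma> \<circ> tr) a = a" using sa by (simp add: tr_def)
      ultimately have stp: "\<sigma> \<circ> tr permutes S'" unfolding S'S by (auto intro: permutes_remove_fix)
      then show "\<sigma> \<circ> tr \<in> {\<tau>. \<tau> permutes S'}" by simp
      show "g (\<sigma> \<circ> tr) = f \<sigma>" using key[OF stp] sst by simp
    qed
    also have "\<dots> = - HH e (Suc a) (r-1) (t+1) m mu"
    proof -
      have ar: "Suc a + (r - 1) = a + r" using r by simp
      show ?thesis unfolding g_def HH_def S'_def ar by (simp add: sum_negf)
    qed
    finally show ?thesis using True by simp
  qed
  ultimately show ?thesis using HHf by simp
qed

lemma HH_expand:
  "1 \<le> r \<Longrightarrow> HH e a r t m mu = (\<Sum>k\<in>{1..r}. (-1)^(k-1) * comp_op (e (t + int k)) (HH e (a+k) (r-k) 0) m mu)"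
proof (induction r arbitrary: a t rule: nat_induct_at_least)
  case base
  show ?case using HH_rec[of 1 a t m mu] by simp
next
  case (Suc r)
  have "(\<Sum>k\<in>{1..Suc r}. (-1)^(k-1) * comp_op (e (t + int k)) (HH e (a+k) (Suc r-k) 0) m mu)
     = comp_op (e (t + 1)) (HH e (Suc a) r 0) m mu +
       (\<Sum>k\<in>{Suc 1..Suc r}. (-1)^(k-1) * comp_op (e (t + int k)) (HH e (a+k) (Suc r-k) 0) m mu)"
    by (subst sum.atLeast_Suc_atMost) auto
  also have "(\<Sum>k\<in>{Suc 1..Suc r}. (-1)^(k-1) * comp_op (e (t + int k)) (HH e (a+k) (Suc r-k) 0) m mu)
     = (\<Sum>k\<in>{1..r}. (-1)^(Suc k-1) * comp_op (e (t + int (Suc k))) (HH e (a+Suc k) (Suc r-Suc k) 0) m mu)"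
    by (rule sum.shift_bounds_cl_Suc_ivl)
  also have "\<dots> = - (\<Sum>k\<in>{1..r}. (-1)^(k-1) * comp_op (e ((t + 1) + int k)) (HH e (Suc a + k) (r-k) 0) m mu)"
  proof -
    have "(-1)^(Suc k-1) * comp_op (e (t + int (Suc k))) (HH e (a+Suc k) (Suc r-Suc k) 0) m mu =
      - ((-1)^(k-1) * comp_op (e ((t + 1) + int k)) (HH e (Suc a + k) (r-k) 0) m mu)" if "k \<in> {1..r}" for k
    proof -
      have "(-1::'a)^(Suc k-1) = - ((-1)^(k-1))" using that by (cases k) auto
      moreover have "t + int (Suc k) = (t + 1) + int k" by simp
      ultimately show ?thesis by (simp add: ac_simps)
    qed
    then show ?thesis by (simp add: sum_negf)
  qed
  finally show ?case using HH_rec[of "Suc r" a t m mu] Suc by simp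
qed

lemma HH_shift: "HH e a r 0 = HH e b r 0"
proof (induction r arbitrary: a b rule: less_induct)
  case (less r)
  show ?case
  proof (cases "r = 0")
    case True then show ?thesis by (simp add: HH_0)
  next
    case False
    then have r: "1 \<le> r" by simp
    show ?thesis
    proof (intro ext)
      fix m mu
      show "HH e a r 0 m mu = HH e b r 0 m mu"
        unfolding HH_expand[OF r]
        by (rule sum.cong[OF refl]) (subst less[of "r - _" "a + _" "b + _"], auto)
    qed
  qed
qed

end

lemma comp_sum_right':
  fixes A :: "'a::comm_ring_1 oper"
  assumes "finite X" "\<And>x. x \<in> X \<Longrightarrow> finitary (F x)"
  shows "comp_op A (\<lambda>m mu. \<Sum>x\<in>X. F x m mu) m mu = (\<Sum>x\<in>X. comp_op A (F x) m mu)"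
  using comp_sum_right[OF assms, where A=A and c="\<lambda>_. 1" and m=m and mu=mu] by simp

lemma comp_sum_left':
  fixes B :: "'a::comm_ring_1 oper"
  shows "comp_op (\<lambda>m mu. \<Sum>x\<in>X. F x m mu) B m mu = (\<Sum>x\<in>X. comp_op (F x) B m mu)"
  using comp_sum_left[where c="\<lambda>_. 1" and F=F and X=X and B=B and m=m and mu=mu] by simp

lemma finitary_sum':
  fixes F :: "_ \<Rightarrow> 'a::comm_ring_1 oper"
  assumes "finite X" "\<And>x. x \<in> X \<Longrightarrow> finitary (F x)"
  shows "finitary (\<lambda>m mu. \<Sum>x\<in>X. F x m mu)"
  using finitary_sum[OF assms, where c="\<lambda>_. 1"] by simp

lemma finitary_conv: "(\<And>k. finitary (A k)) \<Longrightarrow> (\<And>k. finitary (B k)) \<Longrightarrow> finitary (conv_op A B r)"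
  unfolding conv_op_def by (rule finitary_sum') (auto intro: finitary_comp)

lemma conv_swap:
  fixes A B :: "nat \<Rightarrow> 'a::field oper"
  assumes finA: "\<And>k. finitary (A k)" and finB: "\<And>k. finitary (B k)"
    and A0: "A 0 = id_op"
    and inv: "\<And>l. conv_op A B l = (if l = 0 then id_op else zero_op)"
  shows "conv_op B A r = (if r = 0 then id_op else zero_op)"
proof (induction r rule: less_induct)
  case (less r)
  show ?case
  proof (intro ext)
    fix m mu
    define L where "L = (\<Sum>j\<in>{..r}. comp_op (A j) (conv_op B A (r-j)) m mu)"
    have "L = (\<Sum>j\<in>{..r}. \<Sum>k\<in>{..r-j}. comp_op (A j) (comp_op (B k) (A (r-j-k))) m mu)"
      unfolding L_def conv_op_def atLeast0AtMost
      by (rule sum.cong[OF refl], rule comp_sum_right') (auto intro: finitary_comp finA finB)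
    also have "\<dots> = (\<Sum>j\<in>{..r}. \<Sum>k\<in>{..r-j}. comp_op (comp_op (A j) (B k)) (A (r-(j+k))) m mu)"
      by (simp add: comp_assoc[OF finB finA] diff_diff_left)
    also have "\<dots> = (\<Sum>(j,k)\<in>{(j,k). j+k \<le> r}. comp_op (comp_op (A j) (B k)) (A (r-(j+k))) m mu)"
    proof -
      have "{(j,k). j+k \<le> r} = Sigma {..r} (\<lambda>j. {..r-j})" by auto
      then show ?thesis by (simp add: sum.Sigma)
    qed
    also have "\<dots> = (\<Sum>l\<in>{..r}. \<Sum>j\<in>{..l}. comp_op (comp_op (A j) (B (l-j))) (A (r-(j+(l-j)))) m mu)"
      by (rule sum.triangle_reindex_eq)
    also have "\<dots> = (\<Sum>l\<in>{..r}. comp_op (conv_op A B l) (A (r-l)) m mu)"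
      unfolding conv_op_def atLeast0AtMost comp_sum_left' by simp
    also have "\<dots> = (\<Sum>l\<in>{..r}. if l = 0 then A r m mu else 0)"
      unfolding inv
    proof (rule sum.cong[OF refl])
      fix l show "comp_op (if l = 0 then id_op else zero_op) (A (r - l)) m mu = (if l = 0 then A r m mu else 0)"
        by (cases "l = 0") (simp add: comp_id_left finA[unfolded finitary_def], simp add: comp_zero_left[unfolded zero_op_def] zero_op_def)
    qed
    also have "\<dots> = A r m mu" by simp
    finally have L1: "L = A r m mu" .
    have fBA: "finitary (conv_op B A r)" by (rule finitary_conv[OF finB finA])
    have ins: "{..r} = insert 0 {1..r}" by auto
    have "L = comp_op (A 0) (conv_op B A r) m mu + (\<Sum>j\<in>{1..r}. comp_op (A j) (conv_op B A (r-j)) m mu)"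
      unfolding L_def ins by (subst sum.insert) auto
    also have "\<dots> = conv_op B A r m mu + (\<Sum>j\<in>{1..r}. if j = r then A r m mu else 0)"
    proof -
      have "comp_op (A j) (conv_op B A (r-j)) m mu = (if j = r then A r m mu else 0)" if "j \<in> {1..r}" for j
        using that less[of "r-j"] by (auto simp: comp_id_right comp_zero_right[unfolded zero_op_def] zero_op_def)
      then show ?thesis
        using fBA by (simp add: A0 comp_id_left finitary_def)
    qed
    also have "\<dots> = conv_op B A r m mu + (if 1 \<le> r then A r m mu else 0)"
      by simp
    finally have L2: "L = conv_op B A r m mu + (if 1 \<le> r then A r m mu else 0)" .
    show "conv_op B A r m mu = (if r = 0 then id_op else zero_op) m mu"
      using L1 L2 A0 by (cases "r = 0") (auto simp: zero_op_def)
  qed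
qed


lemma finite_comps: "finite (comps n r)"
proof -
  have "comps n r \<subseteq> {f. \<forall>x. (x \<in> {1..n} \<longrightarrow> f x \<in> {..r}) \<and> (x \<notin> {1..n} \<longrightarrow> f x = 0)}"
  proof (intro subsetI CollectI allI conjI impI)
    fix \<alpha> x assume a: "\<alpha> \<in> comps n r"
    { assume x: "x \<in> {1..n}"
      have "\<alpha> x \<le> (\<Sum>i=1..n. \<alpha> i)" using x by (simp add: sum.remove)
      then show "\<alpha> x \<in> {..r}" using a by (simp add: comps_def) }
    { assume "x \<notin> {1..n}" then have x0: "x = 0 \<or> n < x" by auto
      have al: "\<forall>i. (i = 0 \<or> n < i) \<longrightarrow> \<alpha> i = 0" using a unfolding comps_def mem_Collect_eq by (rule conjunct1)
      have "(x = 0 \<or> n < x) \<longrightarrow> \<alpha> x = 0" using al by (rule spec)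
      then show "\<alpha> x = 0" using x0 by (rule mp) }
  qed
  moreover have "finite {f. \<forall>x. (x \<in> {1..n} \<longrightarrow> f x \<in> {..r}) \<and> (x \<notin> {1..n} \<longrightarrow> f x = (0::nat))}"
    by (rule finite_set_of_finite_funs) auto
  ultimately show ?thesis by (rule finite_subset)
qed

lemma comps_0: "comps n 0 = {\<lambda>_. 0}"
proof (rule set_eqI, rule iffI)
  fix \<alpha> assume a: "\<alpha> \<in> comps n 0"
  have "\<alpha> i = 0" for i
  proof (cases "i = 0 \<or> n < i")
    case True then show ?thesis using a by (auto simp: comps_def)
  next
    case False
    then have "i \<in> {1..n}" by auto
    then show ?thesis using a by (simp add: comps_def)
  qed
  then show "\<alpha> \<in> {\<lambda>_. 0}" by auto
qed (simp add: comps_def)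

definition cP :: "'a::field \<Rightarrow> 'a \<Rightarrow> nat \<Rightarrow> (nat \<Rightarrow> nat) \<Rightarrow> 'a" where
  "cP q z n \<alpha> = z ^ \<alpha> n / (\<Prod>i=1..n. qpoch q (\<alpha> i))"

definition cM :: "'a::field \<Rightarrow> 'a \<Rightarrow> nat \<Rightarrow> (nat \<Rightarrow> nat) \<Rightarrow> 'a" where
  "cM q z n \<alpha> = z ^ \<alpha> n / (\<Prod>i=1..n. qpoch q (\<alpha> i)) * (\<Prod>i=1..n. q ^ (\<alpha> i * (\<alpha> i + 1)))"

lemma Qplus_ws:
  assumes n: "1 \<le> n"
  shows "Qplus n q z r = (\<lambda>m mu. \<Sum>\<alpha>\<in>comps n r. ((-1)^r * cP q z n \<alpha>) * ws (sigP n \<alpha>) (kapP q n \<alpha>) m mu)"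
  unfolding Qplus_def MP[OF n] by (rule ext)+ (simp add: sum_distrib_left mult.assoc cP_def)

lemma Qminus_ws:
  assumes n: "1 \<le> n"
  shows "Qminus n q z r = (\<lambda>m mu. \<Sum>\<alpha>\<in>comps n r. cM q z n \<alpha> * ws (sigM n \<alpha>) (kapM q n \<alpha>) m mu)"
  unfolding Qminus_def MM[OF n] by (rule ext)+ (simp add: cM_def)

lemma finitary_Qplus: "1 \<le> n \<Longrightarrow> finitary (Qplus n q z r)"
  unfolding Qplus_ws[of n] by (rule finitary_sum) (auto simp: finite_comps finitary_ws)

lemma finitary_Qminus: "1 \<le> n \<Longrightarrow> finitary (Qminus n q z r)"
  unfolding Qminus_ws[of n] by (rule finitary_sum) (auto simp: finite_comps finitary_ws)

lemma Qplus_0: "1 \<le> n \<Longrightarrow> Qplus n q z 0 = id_op"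
  unfolding Qplus_ws comps_0 id_ws
  by (simp add: cP_def qpoch_def) (rule ws_cong, auto simp: sigP_def kapP_def pp_def)

lemma Qminus_0: "1 \<le> n \<Longrightarrow> Qminus n q z 0 = id_op"
  unfolding Qminus_ws comps_0 id_ws
  by (simp add: cM_def qpoch_def) (rule ws_cong, auto simp: sigM_def kapM_def pp_def)

definition ee :: "nat \<Rightarrow> 'a::field \<Rightarrow> 'a \<Rightarrow> int \<Rightarrow> 'a oper" where
  "ee n q z s = scale_op ((-1) ^ nat s) (Qplus_int n q z s)"

lemma hess_ee:
  assumes n: "1 \<le> n"
  shows "hess (ee n q z)"
proof unfold_locales
  fix s :: int assume "s < 0"
  then show "ee n q z s = zero_op" by (intro ext) (simp add: ee_def Qplus_int_def scale_op_def zero_op_def)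
next
  show "ee n q z 0 = id_op" by (intro ext) (simp add: ee_def Qplus_int_def scale_op_def Qplus_0[OF n])
next
  fix s show "finitary (ee n q z s)"
    unfolding ee_def Qplus_int_def by (auto intro!: finitary_scale finitary_Qplus finitary_zero n)
qed

lemma Dcoef_HH: "Dcoef n q z r = HH (ee n q z) 1 r 0"
proof -
  have E: "(\<lambda>i j. let s = 1 - int i + int j in scale_op ((-1) ^ nat s) (Qplus_int n q z s)) = EE (ee n q z) 0 1"
    by (intro ext) (simp add: EE_def ee_def Let_def)
  have u: "1 + r = Suc r" by simp
  show ?thesis
    unfolding Dcoef_def det_op_def HH_def E u atLeastLessThanSuc_atLeastAtMost ..
qed

lemma finitary_Dcoef: "1 \<le> n \<Longrightarrow> finitary (Dcoef n q z r)"
  unfolding Dcoef_HH using hess_ee hess.finitary_HH by blast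

lemma Dcoef_0: "Dcoef n q z 0 = id_op"
  by (rule ext)+ (simp add: Dcoef_def det_op_def)

lemma Dcoef_rec:
  assumes n: "1 \<le> n" and r: "1 \<le> r"
  shows "Dcoef n q z r m mu = - (\<Sum>k\<in>{1..r}. comp_op (Qplus n q z k) (Dcoef n q z (r-k)) m mu)"
proof -
  interpret hess "ee n q z" by (rule hess_ee[OF n])
  have "Dcoef n q z r m mu = (\<Sum>k\<in>{1..r}. (-1)^(k-1) * comp_op (ee n q z (0 + int k)) (HH (ee n q z) (1+k) (r-k) 0) m mu)"
    unfolding Dcoef_HH by (rule HH_expand[OF r])
  also have "\<dots> = (\<Sum>k\<in>{1..r}. - comp_op (Qplus n q z k) (Dcoef n q z (r-k)) m mu)"
  proof (rule sum.cong[OF refl])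
    fix k assume k: "k \<in> {1..r}"
    have "(-1::'a)^(k-1) * (-1)^k = -1" using k by (cases k) auto
    then show "(-1)^(k-1) * comp_op (ee n q z (0 + int k)) (HH (ee n q z) (1+k) (r-k) 0) m mu = - comp_op (Qplus n q z k) (Dcoef n q z (r-k)) m mu"
      unfolding Dcoef_HH HH_shift[of "1+k" _ 1] by (simp add: ee_def Qplus_int_def comp_scale_left mult.assoc[symmetric])
  qed
  finally show ?thesis by (simp add: sum_negf)
qed

lemma conv_PD:
  assumes n: "1 \<le> n"
  shows "conv_op (Qplus n q z) (Dcoef n q z) r = (if r = 0 then id_op else zero_op)"
proof (intro ext)
  fix m mu
  show "conv_op (Qplus n q z) (Dcoef n q z) r m mu = (if r = 0 then id_op else zero_op) m mu"
  proof (cases "r = 0")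
    case True then show ?thesis by (simp add: conv_op_def Qplus_0[OF n] Dcoef_0 comp_id_right)
  next
    case False
    have ins: "{0..r} = insert 0 {1..r}" by auto
    have "conv_op (Qplus n q z) (Dcoef n q z) r m mu = Dcoef n q z r m mu + (\<Sum>k\<in>{1..r}. comp_op (Qplus n q z k) (Dcoef n q z (r-k)) m mu)"
      unfolding conv_op_def ins using finitary_Dcoef[OF n, of q z r]
      by (subst sum.insert) (auto simp: Qplus_0[OF n] comp_id_left finitary_def)
    then show ?thesis using Dcoef_rec[OF n, of r q z m mu] False by (simp add: zero_op_def)
  qed
qed

lemma conv_DP:
  assumes n: "1 \<le> n"
  shows "conv_op (Dcoef n q z) (Qplus n q z) r = (if r = 0 then id_op else zero_op)"
  by (rule conv_swap) (auto simp: finitary_Qplus[OF n] finitary_Dcoef[OF n] Qplus_0[OF n] conv_PD[OF n])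


lemma qpoch_nz:
  fixes q :: "'a::field"
  assumes qp: "\<forall>j\<ge>1. q ^ j \<noteq> 1"
  shows "qpoch q k \<noteq> 0"
  unfolding qpoch_def using qp by (auto simp: power_mult[symmetric])

lemma qpoch_0[simp]: "qpoch q 0 = 1" by (simp add: qpoch_def)

lemma qpoch_Suc: "qpoch q (Suc k) = qpoch q k * (1 - q ^ (2 * Suc k))"
  by (simp add: qpoch_def)

lemma q2_ne1:
  fixes q :: "'a::field"
  assumes qp: "\<forall>j\<ge>1. q ^ j \<noteq> 1"
  shows "1 - (q^2) ^ Suc k \<noteq> 0"
proof -
  have "q ^ (2 * Suc k) \<noteq> 1" by (rule qp[rule_format]) simp
  then show ?thesis by (metis power_mult right_minus_eq)
qed

definition wq :: "'a::field \<Rightarrow> nat \<Rightarrow> nat \<Rightarrow> 'a" where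
  "wq q g b = (if b \<le> g then inverse (qpoch q b * qpoch q (g - b)) else 0)"

lemma wq_pascal0:
  fixes q :: "'a::field"
  assumes qp: "\<forall>j\<ge>1. q ^ j \<noteq> 1"
  shows "(1 - (q^2) ^ Suc g) * wq q (Suc g) 0 = wq q g 0"
proof -
  define X where "X = 1 - (q^2) ^ Suc g"
  have qs: "qpoch q (Suc g) = qpoch q g * X" unfolding qpoch_Suc X_def power_mult by (rule refl)
  have "qpoch q g \<noteq> 0" "X \<noteq> 0"
    using qpoch_nz[OF qp] q2_ne1[OF qp] by (auto simp: X_def)
  then show ?thesis
    unfolding X_def[symmetric] by (simp add: wq_def qs field_simps)
qed

lemma wq_pascal:
  fixes q :: "'a::field"
  assumes qp: "\<forall>j\<ge>1. q ^ j \<noteq> 1" and bg: "b \<le> g"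
  shows "(1 - (q^2) ^ Suc g) * wq q (Suc g) (Suc b) = (q^2) ^ Suc b * wq q g (Suc b) + wq q g b"
proof (cases "b = g")
  case True
  define X where "X = 1 - (q^2) ^ Suc g"
  have qs: "qpoch q (Suc g) = qpoch q g * X" unfolding qpoch_Suc X_def power_mult by (rule refl)
  have "qpoch q g \<noteq> 0" "X \<noteq> 0"
    using qpoch_nz[OF qp] q2_ne1[OF qp] by (auto simp: X_def)
  then show ?thesis using True
    unfolding X_def[symmetric] by (simp add: wq_def qs field_simps)
next
  case False
  then obtain c where c: "g = Suc (b + c)" using bg by (metis add_Suc_right le_add_diff_inverse le_neq_implies_less less_imp_Suc_add)
  define Q where "Q = q^2"
  define A where "A = Q ^ Suc b"
  define C where "C = Q ^ Suc c"
  have nz: "qpoch q b \<noteq> 0" "qpoch q c \<noteq> 0" "1 - A \<noteq> 0" "1 - C \<noteq> 0"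
    using qpoch_nz[OF qp] q2_ne1[OF qp] by (auto simp: Q_def A_def C_def)
  have e2: "Q ^ Suc g = A * C" using c by (simp add: A_def C_def power_add[symmetric])
  have qs: "qpoch q (Suc k) = qpoch q k * (1 - Q ^ Suc k)" for k
    unfolding qpoch_Suc Q_def power_mult by (rule refl)
  have w1: "wq q (Suc g) (Suc b) = inverse (qpoch q b * (1 - A) * (qpoch q c * (1 - C)))"
    using c by (simp add: wq_def qs A_def C_def)
  have w2: "wq q g (Suc b) = inverse (qpoch q b * (1 - A) * qpoch q c)"
    using c by (simp add: wq_def qs A_def)
  have w3: "wq q g b = inverse (qpoch q b * (qpoch q c * (1 - C)))"
    using c by (simp add: wq_def qs C_def)
  define B where "B = 1 - A"
  define D where "D = 1 - C"
  have AB: "A = 1 - B" "C = 1 - D" by (simp_all add: B_def D_def)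
  have nz2: "B \<noteq> 0" "D \<noteq> 0" using nz by (simp_all add: B_def D_def)
  show ?thesis
    unfolding Q_def[symmetric] e2 w1 w2 w3 A_def[symmetric] B_def[symmetric] D_def[symmetric] AB(1)
    unfolding AB(2)
    using nz(1,2) nz2 by (simp add: field_simps)
qed


definition PsiQ :: "'a::field \<Rightarrow> nat \<Rightarrow> 'a" where
  "PsiQ q g = (\<Sum>b\<in>{..g}. (-1)^b * q^(b*(b-1)) * (q^2)^b * wq q g b)"

definition Phi1 :: "'a::field \<Rightarrow> nat \<Rightarrow> 'a" where
  "Phi1 q g = (\<Sum>b\<in>{..g}. (-1)^b * q^(b*(b-1)) * wq q g b)"

lemma Phi1_Suc:
  fixes q :: "'a::field"
  assumes qp: "\<forall>j\<ge>1. q ^ j \<noteq> 1"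
  shows "Phi1 q (Suc g) = 0"
proof -
  define Q where "Q = q^2"
  define f where "f d = (-1)^d * q^(d*(d-1)) * Q^d * wq q g d" for d
  have "(1 - Q ^ Suc g) * Phi1 q (Suc g) = (\<Sum>b\<in>{..Suc g}. (-1)^b * q^(b*(b-1)) * ((1 - Q ^ Suc g) * wq q (Suc g) b))"
    unfolding Phi1_def sum_distrib_left by (rule sum.cong) (simp_all add: mult_ac)
  also have "\<dots> = wq q g 0 + (\<Sum>c\<in>{..g}. (-1)^(Suc c) * q^(Suc c*c) * ((1 - Q ^ Suc g) * wq q (Suc g) (Suc c)))"
    unfolding sum.atMost_Suc_shift using wq_pascal0[OF qp, of g] by (simp add: Q_def)
  also have "(\<Sum>c\<in>{..g}. (-1)^(Suc c) * q^(Suc c*c) * ((1 - Q ^ Suc g) * wq q (Suc g) (Suc c)))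
      = (\<Sum>c\<in>{..g}. f (Suc c)) + (\<Sum>c\<in>{..g}. - ((-1)^c * q^(c*(c-1)) * Q^c * wq q g c))"
    unfolding sum.distrib[symmetric]
  proof (rule sum.cong[OF refl])
    fix c assume "c \<in> {..g}"
    then have cg: "c \<le> g" by simp
    have pw: "q^(Suc c*c) = q^(c*(c-1)) * Q^c"
    proof -
      have ee: "Suc c * c = c*(c-1) + 2*c" by (cases c) auto
      show ?thesis by (simp only: ee Q_def power_add power_mult)
    qed
    have pw': "q^(Suc c * (Suc c - 1)) = q^(c*(c-1)) * Q^c" using pw by simp
    show "(-1)^(Suc c) * q^(Suc c*c) * ((1 - Q ^ Suc g) * wq q (Suc g) (Suc c)) = f (Suc c) + - ((-1)^c * q^(c*(c-1)) * Q^c * wq q g c)"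
      unfolding wq_pascal[OF qp cg, folded Q_def] f_def pw pw' by (simp add: algebra_simps)
  qed
  also have "(\<Sum>c\<in>{..g}. f (Suc c)) = PsiQ q g - wq q g 0"
  proof -
    have h1: "(\<Sum>d\<in>{..Suc g}. f d) = f 0 + (\<Sum>c\<in>{..g}. f (Suc c))" by (rule sum.atMost_Suc_shift)
    have h2: "(\<Sum>d\<in>{..Suc g}. f d) = PsiQ q g"
      by (simp add: f_def PsiQ_def Q_def wq_def)
    have f0: "f 0 = wq q g 0" by (simp add: f_def)
    show ?thesis using h1 h2 f0 by (metis add_diff_cancel_left')
  qed
  also have "(\<Sum>c\<in>{..g}. - ((-1)^c * q^(c*(c-1)) * Q^c * wq q g c)) = - PsiQ q g"
    by (simp add: PsiQ_def Q_def sum_negf)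
  finally have "(1 - Q ^ Suc g) * Phi1 q (Suc g) = 0" by simp
  moreover have "1 - Q ^ Suc g \<noteq> 0" using q2_ne1[OF qp] by (simp add: Q_def)
  ultimately show ?thesis by simp
qed

lemma qsum_zero:
  fixes q :: "'a::field"
  assumes qp: "\<forall>j\<ge>1. q ^ j \<noteq> 1" and g: "1 \<le> g"
  shows "(\<Sum>a\<in>{..g}. (-(q^2))^a * q^((g-a)*(g-a+1)) / (qpoch q a * qpoch q (g-a))) = 0"
proof -
  have "(\<Sum>a\<in>{..g}. (-(q^2))^a * q^((g-a)*(g-a+1)) / (qpoch q a * qpoch q (g-a)))
      = (\<Sum>b\<in>{..g}. (-(q^2))^(g-b) * q^(b*(b+1)) / (qpoch q (g-b) * qpoch q b))"
    by (rule sum.reindex_bij_witness[where i="\<lambda>b. g - b" and j="\<lambda>b. g - b"]) auto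
  also have "\<dots> = (\<Sum>b\<in>{..g}. (-(q^2))^g * ((-1)^b * q^(b*(b-1)) * wq q g b))"
  proof (rule sum.cong[OF refl])
    fix b assume "b \<in> {..g}"
    then have bg: "b \<le> g" by simp
    have e1: "(-(q^2))^g = (-(q^2))^(g-b) * (-(q^2))^b" using bg by (simp add: power_add[symmetric])
    have e2: "(-(q^2))^b * (-1)^b = q^(2*b)"
      by (simp add: power_mult_distrib[symmetric] power_mult)
    have e3: "q^(2*b) * q^(b*(b-1)) = q^(b*(b+1))"
    proof -
      have "2*b + b*(b-1) = b*(b+1)" by (cases b) auto
      then show ?thesis by (metis power_add)
    qed
    have "(-(q^2))^g * ((-1)^b * q^(b*(b-1)) * wq q g b) = (-(q^2))^(g-b) * (((-(q^2))^b * (-1)^b) * q^(b*(b-1))) * wq q g b"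
      unfolding e1 by (simp add: mult_ac)
    also have "\<dots> = (-(q^2))^(g-b) * q^(b*(b+1)) * wq q g b" unfolding e2 e3 ..
    also have "\<dots> = (-(q^2))^(g-b) * q^(b*(b+1)) / (qpoch q (g-b) * qpoch q b)"
      using bg by (simp add: wq_def divide_inverse mult.commute)
    finally show "(-(q^2))^(g-b) * q^(b*(b+1)) / (qpoch q (g-b) * qpoch q b) = (-(q^2))^g * ((-1)^b * q^(b*(b-1)) * wq q g b)"
      by (rule sym)
  qed
  also have "\<dots> = (-(q^2))^g * Phi1 q g" by (simp add: Phi1_def sum_distrib_left)
  also have "\<dots> = 0"
    using g Phi1_Suc[OF qp, of "g - 1"] by simp
  finally show ?thesis .
qed


definition sc :: "nat \<Rightarrow> nat \<Rightarrow> nat" where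
  "sc n i = (if i = n then 1 else Suc i)"

lemma pr_sc: "1 \<le> i \<Longrightarrow> i \<le> n \<Longrightarrow> pr n (sc n i) = i"
  by (auto simp: sc_def pr_def)

lemma sc_in: "1 \<le> i \<Longrightarrow> i \<le> n \<Longrightarrow> sc n i \<in> {1..n}"
  by (auto simp: sc_def)

lemma pr_in: "1 \<le> i \<Longrightarrow> i \<le> n \<Longrightarrow> pr n i \<in> {1..n}"
  by (auto simp: pr_def)

lemma pr_eq_sc:
  assumes j: "j \<in> {1..n}" and i0: "i0 \<in> {1..n}" and p: "pr n j = i0"
  shows "j = sc n i0"
proof (cases "j = 1")
  case True
  then have "i0 = n" using p by (simp add: pr_def)
  then show ?thesis using True by (simp add: sc_def)
next
  case False
  then have ij: "i0 = j - 1" using p by (simp add: pr_def)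
  then have "i0 \<noteq> n" using j False by auto
  then show ?thesis using ij j False by (simp add: sc_def)
qed

lemma comps_out:
  assumes "\<alpha> \<in> comps n r" "i = 0 \<or> n < i"
  shows "\<alpha> i = 0"
proof -
  have "\<forall>i. (i = 0 \<or> n < i) \<longrightarrow> \<alpha> i = 0" using assms(1) unfolding comps_def mem_Collect_eq by (rule conjunct1)
  then have "(i = 0 \<or> n < i) \<longrightarrow> \<alpha> i = 0" by (rule spec)
  then show ?thesis using assms(2) by (rule mp)
qed

lemma comps_sum: "\<alpha> \<in> comps n r \<Longrightarrow> (\<Sum>i=1..n. \<alpha> i) = r"
  unfolding comps_def mem_Collect_eq by (rule conjunct2)

lemma comps_intro: "(\<And>i. i = 0 \<or> n < i \<Longrightarrow> \<alpha> i = 0) \<Longrightarrow> (\<Sum>i=1..n. \<alpha> i) = r \<Longrightarrow> \<alpha> \<in> comps n r"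
  unfolding comps_def by simp

lemma exists_i0:
  assumes g: "\<gamma> \<in> comps n r" and r: "1 \<le> r" and rn: "r < n"
  shows "\<exists>i0. 1 \<le> i0 \<and> i0 \<le> n \<and> 1 \<le> \<gamma> i0 \<and> \<gamma> (sc n i0) = 0"
proof -
  define Z where "Z = {j\<in>{1..n}. \<gamma> j = 0}"
  define P where "P = {i\<in>{1..n}. 1 \<le> \<gamma> i}"
  have fZ: "finite Z" "finite P" by (auto simp: Z_def P_def)
  have sg: "(\<Sum>i=1..n. \<gamma> i) = r" using comps_sum[OF g] .
  have "Z \<noteq> {}"
  proof
    assume "Z = {}"
    then have "\<forall>j\<in>{1..n}. 1 \<le> \<gamma> j" by (auto simp: Z_def)
    then have "(\<Sum>i=1..n. (1::nat)) \<le> (\<Sum>i=1..n. \<gamma> i)" by (intro sum_mono) auto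
    then show False using sg rn by simp
  qed
  have "P \<noteq> {}"
  proof
    assume "P = {}"
    then have "\<forall>j\<in>{1..n}. \<gamma> j = 0" by (auto simp: P_def)
    then have "(\<Sum>i=1..n. \<gamma> i) = 0" by simp
    then show False using sg r by simp
  qed
  show ?thesis
  proof (cases "\<gamma> 1 = 0")
    case False
    define j0 where "j0 = Min Z"
    have j0Z: "j0 \<in> Z" unfolding j0_def using fZ(1) \<open>Z \<noteq> {}\<close> by (rule Min_in)
    then have j0: "1 \<le> j0" "j0 \<le> n" "\<gamma> j0 = 0" by (auto simp: Z_def)
    then have j02: "2 \<le> j0" using False by (cases "j0 = 1") auto
    define i0 where "i0 = j0 - 1"
    have "i0 \<notin> Z"
    proof
      assume "i0 \<in> Z"
      then have "j0 \<le> i0" unfolding j0_def using fZ(1) by (intro Min_le)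
      then show False using j02 by (simp add: i0_def)
    qed
    then have "1 \<le> \<gamma> i0" using j02 j0 by (auto simp: Z_def i0_def)
    moreover have "sc n i0 = j0" using j02 j0 by (auto simp: sc_def i0_def)
    ultimately show ?thesis using j02 j0 by (intro exI[of _ i0]) (auto simp: i0_def)
  next
    case True
    define i1 where "i1 = Max P"
    have i1P: "i1 \<in> P" unfolding i1_def using fZ(2) \<open>P \<noteq> {}\<close> by (rule Max_in)
    then have i1: "1 \<le> i1" "i1 \<le> n" "1 \<le> \<gamma> i1" by (auto simp: P_def)
    show ?thesis
    proof (cases "i1 = n")
      case True
      then show ?thesis using i1 \<open>\<gamma> 1 = 0\<close> by (intro exI[of _ i1]) (auto simp: sc_def)
    next
      case False
      have "\<gamma> (Suc i1) = 0"
      proof (rule ccontr)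
        assume "\<gamma> (Suc i1) \<noteq> 0"
        then have "Suc i1 \<in> P" using i1 False by (auto simp: P_def)
        then have "Suc i1 \<le> i1" unfolding i1_def using fZ(2) by (intro Max_ge)
        then show False by simp
      qed
      then show ?thesis using i1 False by (intro exI[of _ i1]) (auto simp: sc_def)
    qed
  qed
qed

definition box :: "(nat \<Rightarrow> nat) \<Rightarrow> (nat \<Rightarrow> nat) set" where
  "box \<gamma> = {\<alpha>. \<forall>i. \<alpha> i \<le> \<gamma> i}"

lemma finite_box:
  assumes g: "\<gamma> \<in> comps n r"
  shows "finite (box \<gamma>)"
proof -
  have "box \<gamma> \<subseteq> {f. \<forall>x. (x \<in> {1..n} \<longrightarrow> f x \<in> {..r}) \<and> (x \<notin> {1..n} \<longrightarrow> f x = 0)}"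
  proof (intro subsetI CollectI allI conjI impI)
    fix \<alpha> x assume a: "\<alpha> \<in> box \<gamma>"
    then have ax: "\<alpha> x \<le> \<gamma> x" by (simp add: box_def)
    { assume x: "x \<in> {1..n}"
      have "\<gamma> x \<le> (\<Sum>i=1..n. \<gamma> i)" using x by (simp add: sum.remove)
      then show "\<alpha> x \<in> {..r}" using ax comps_sum[OF g] by simp }
    { assume "x \<notin> {1..n}" then have "x = 0 \<or> n < x" by auto
      then have "\<gamma> x = 0" by (rule comps_out[OF g])
      then show "\<alpha> x = 0" using ax by simp }
  qed
  moreover have "finite {f. \<forall>x. (x \<in> {1..n} \<longrightarrow> f x \<in> {..r}) \<and> (x \<notin> {1..n} \<longrightarrow> f x = (0::nat))}"
    by (rule finite_set_of_finite_funs) auto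
  ultimately show ?thesis by (rule finite_subset)
qed

lemma pp_add: "pp q x a * pp q (x + a) b = pp q x (a + b)"
  by (induction b) (auto simp: pp_def algebra_simps)


lemma site_eq:
  fixes x B g a b :: nat
  assumes "a \<le> g"
  shows "(if g - a \<le> x + B then 1 else 0) * pp q x B * ((if a \<le> x + B - (g - a) then 1 else 0) * pp q (x + B - (g - a) - a) b)
    = (if g \<le> x + B then 1 else 0) * pp q x B * pp q (x + B - g) b"
proof (cases "g \<le> x + B")
  case True
  have h1: "g - a \<le> x + B" "a \<le> x + B - (g - a)" "x + B - (g - a) - a = x + B - g" using assms True by arith+
  show ?thesis unfolding if_P[OF h1(1)] if_P[OF h1(2)] if_P[OF True] h1(3) by simp
next
  case False
  then have "\<not> (g - a \<le> x + B \<and> a \<le> x + B - (g - a))" using assms by arith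
  then show ?thesis using False by auto
qed

definition Fterm :: "'a::field \<Rightarrow> 'a \<Rightarrow> nat \<Rightarrow> state \<Rightarrow> state \<Rightarrow> nat \<Rightarrow> (nat \<Rightarrow> nat) \<Rightarrow> (nat \<Rightarrow> nat) \<Rightarrow> 'a" where
  "Fterm q z n m mu k \<alpha>' \<alpha> = q^(2*k) * (cM q z n \<alpha>' * (kapM q n \<alpha>' m *
      ((-1)^k * cP q z n \<alpha> * ws (sigP n \<alpha>) (kapP q n \<alpha>) (sigM n \<alpha>' m) mu)))"

definition sz :: "nat \<Rightarrow> (nat \<Rightarrow> nat) \<Rightarrow> nat" where
  "sz n \<alpha> = (\<Sum>i=1..n. \<alpha> i)"

lemma prod_qpoch_nz:
  fixes q :: "'a::field" and n :: nat
  assumes qp: "\<forall>j\<ge>1. q ^ j \<noteq> 1"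
  shows "(\<Prod>i=1..n. qpoch q (f i)) \<noteq> 0"
  using qpoch_nz[OF qp] by (simp add: prod_zero_iff)

lemma gamma_zero:
  fixes q z :: "'a::field"
  assumes n: "1 \<le> n" and qp: "\<forall>j\<ge>1. q ^ j \<noteq> 1"
    and g: "\<gamma> \<in> comps n r" and r: "1 \<le> r" and rn: "r < n"
  shows "(\<Sum>\<alpha>\<in>box \<gamma>. Fterm q z n m mu (sz n \<alpha>) (\<lambda>i. \<gamma> i - \<alpha> i) \<alpha>) = 0"
proof -
  obtain i0 where i0: "1 \<le> i0" "i0 \<le> n" "1 \<le> \<gamma> i0" "\<gamma> (sc n i0) = 0"
    using exists_i0[OF g r rn] by blast
  define j0 where "j0 = sc n i0"
  have i0n: "i0 \<in> {1..n}" using i0 by simp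
  have j0n: "j0 \<in> {1..n}" unfolding j0_def using i0(1,2) by (rule sc_in)
  have prj0: "pr n j0 = i0" unfolding j0_def using i0(1,2) by (rule pr_sc)
  have gj0: "\<gamma> j0 = 0" using i0 by (simp add: j0_def)
  define u where "u i a = (-(q^2))^a * q^((\<gamma> i - a)*(\<gamma> i - a + 1)) / (qpoch q a * qpoch q (\<gamma> i - a))" for i a
  define W where "W i b = (if \<gamma> i \<le> m i + (\<gamma> (pr n i) - b) then 1 else 0) * pp q (m i) (\<gamma> (pr n i) - b)
      * pp q (m i + (\<gamma> (pr n i) - b) - \<gamma> i) b" for i b
  define tau where "tau = (\<lambda>i. if 1 \<le> i \<and> i \<le> n then m i + \<gamma> (pr n i) - \<gamma> i else m i)"
  define R where "R \<beta> = (\<Prod>i\<in>{1..n}-{i0}. u i (\<beta> i)) * pp q (m j0) (\<gamma> i0) * (\<Prod>i\<in>{1..n}-{j0}. W i (\<beta> (pr n i)))" for \<beta>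
  have C1: "Fterm q z n m mu (sz n \<alpha>) (\<lambda>i. \<gamma> i - \<alpha> i) \<alpha> =
      (if mu = tau then 1 else 0) * z^(\<gamma> n) * ((\<Prod>i\<in>{1..n}. u i (\<alpha> i)) * (\<Prod>i\<in>{1..n}. W i (\<alpha> (pr n i))))"
    if a: "\<alpha> \<in> box \<gamma>" for \<alpha>
  proof -
    define a' where "a' = (\<lambda>i. \<gamma> i - \<alpha> i)"
    define mp where "mp = sigM n a' m"
    have ale: "\<alpha> i \<le> \<gamma> i" for i using a by (simp add: box_def)
    have mpi: "mp i = m i + a' (pr n i) - a' i" if "i \<in> {1..n}" for i
      using that by (simp add: mp_def sigM_def)
    have KK: "kapM q n a' m * kapP q n \<alpha> mp = (\<Prod>i\<in>{1..n}. W i (\<alpha> (pr n i)))"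
      unfolding kapM_def kapP_def prod.distrib[symmetric]
    proof (rule prod.cong[OF refl])
      fix i assume i: "i \<in> {1..n}"
      show "(if a' i \<le> m i + a' (pr n i) then 1 else 0) * pp q (m i) (a' (pr n i)) *
          ((if \<alpha> i \<le> mp i then 1 else 0) * pp q (mp i - \<alpha> i) (\<alpha> (pr n i))) = W i (\<alpha> (pr n i))"
        unfolding mpi[OF i] W_def a'_def using site_eq[OF ale[of i], of "m i" "\<gamma> (pr n i) - \<alpha> (pr n i)" q "\<alpha> (pr n i)"]
        by simp
    qed
    have ST: "sigP n \<alpha> mp = tau" if nz: "(\<Prod>i\<in>{1..n}. W i (\<alpha> (pr n i))) \<noteq> 0"
    proof
      fix i
      show "sigP n \<alpha> mp i = tau i"
      proof (cases "i \<in> {1..n}")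
        case True
        have "W i (\<alpha> (pr n i)) \<noteq> 0" using nz True by (simp add: prod_zero_iff)
        then have le: "\<gamma> i \<le> m i + (\<gamma> (pr n i) - \<alpha> (pr n i))" by (simp add: W_def split: if_splits)
        have "sigP n \<alpha> mp i = (m i + (\<gamma> (pr n i) - \<alpha> (pr n i)) - (\<gamma> i - \<alpha> i)) - \<alpha> i + \<alpha> (pr n i)"
          using True by (simp add: sigP_def mpi a'_def)
        also have "\<dots> = m i + \<gamma> (pr n i) - \<gamma> i" using le ale[of i] ale[of "pr n i"] by arith
        finally show ?thesis using True by (simp add: tau_def)
      next
        case False
        then show ?thesis by (auto simp: sigP_def tau_def mp_def sigM_def)
      qed
    qed
    have WS: "kapM q n a' m * ws (sigP n \<alpha>) (kapP q n \<alpha>) mp mu = (if mu = tau then 1 else 0) * (\<Prod>i\<in>{1..n}. W i (\<alpha> (pr n i)))"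
    proof (cases "(\<Prod>i\<in>{1..n}. W i (\<alpha> (pr n i))) = 0")
      case True
      then have z0: "kapM q n a' m * kapP q n \<alpha> mp = 0" using KK by simp
      show ?thesis
      proof (cases "mu = sigP n \<alpha> mp")
        case True
        have "kapM q n a' m * ws (sigP n \<alpha>) (kapP q n \<alpha>) mp mu = kapM q n a' m * kapP q n \<alpha> mp"
          using True by (simp add: ws_def)
        then show ?thesis unfolding z0 \<open>(\<Prod>i\<in>{1..n}. W i (\<alpha> (pr n i))) = 0\<close> by simp
      next
        case False then show ?thesis using \<open>(\<Prod>i\<in>{1..n}. W i (\<alpha> (pr n i))) = 0\<close> by (simp add: ws_def)
      qed
    next
      case False
      then show ?thesis using KK ST[OF False] by (simp add: ws_def)
    qed
    have pq: "(\<Prod>i=1..n. qpoch q (\<alpha> i)) \<noteq> 0" "(\<Prod>i=1..n. qpoch q (a' i)) \<noteq> 0"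
      using prod_qpoch_nz[OF qp] by auto
    have zz: "z ^ a' n * z ^ \<alpha> n = z ^ \<gamma> n" using ale[of n] by (simp add: a'_def power_add[symmetric])
    have sgn: "q^(2 * sz n \<alpha>) * (-1)^(sz n \<alpha>) = (\<Prod>i=1..n. (-(q^2))^(\<alpha> i))"
    proof -
      have "q^(2 * sz n \<alpha>) * (-1)^(sz n \<alpha>) = (-(q^2))^(sz n \<alpha>)"
        by (simp add: power_mult power_mult_distrib[symmetric])
      also have "\<dots> = (\<Prod>i=1..n. (-(q^2))^(\<alpha> i))" unfolding sz_def by (rule power_sum)
      finally show ?thesis .
    qed
    have up: "(\<Prod>i\<in>{1..n}. u i (\<alpha> i)) = (\<Prod>i=1..n. (-(q^2))^(\<alpha> i)) * (\<Prod>i=1..n. q ^ (a' i * (a' i + 1)))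
        / ((\<Prod>i=1..n. qpoch q (\<alpha> i)) * (\<Prod>i=1..n. qpoch q (a' i)))"
      unfolding u_def a'_def prod_dividef[symmetric] prod.distrib[symmetric] ..
    have SC: "q^(2 * sz n \<alpha>) * cM q z n a' * ((-1)^(sz n \<alpha>) * cP q z n \<alpha>) = z^(\<gamma> n) * (\<Prod>i\<in>{1..n}. u i (\<alpha> i))"
    proof -
      have "q^(2 * sz n \<alpha>) * cM q z n a' * ((-1)^(sz n \<alpha>) * cP q z n \<alpha>) =
          (q^(2 * sz n \<alpha>) * (-1)^(sz n \<alpha>)) * (z ^ a' n * z ^ \<alpha> n) * (\<Prod>i=1..n. q ^ (a' i * (a' i + 1)))
            / ((\<Prod>i=1..n. qpoch q (\<alpha> i)) * (\<Prod>i=1..n. qpoch q (a' i)))"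
        unfolding cM_def cP_def using pq by (simp add: field_simps)
      also have "\<dots> = z^(\<gamma> n) * (\<Prod>i\<in>{1..n}. u i (\<alpha> i))"
        unfolding sgn zz up by (simp add: field_simps)
      finally show ?thesis .
    qed
    have "Fterm q z n m mu (sz n \<alpha>) (\<lambda>i. \<gamma> i - \<alpha> i) \<alpha> =
        (q^(2 * sz n \<alpha>) * cM q z n a' * ((-1)^(sz n \<alpha>) * cP q z n \<alpha>)) * (kapM q n a' m * ws (sigP n \<alpha>) (kapP q n \<alpha>) mp mu)"
      unfolding Fterm_def a'_def[symmetric] mp_def[symmetric] by (simp add: mult_ac)
    also have "\<dots> = (if mu = tau then 1 else 0) * z^(\<gamma> n) * ((\<Prod>i\<in>{1..n}. u i (\<alpha> i)) * (\<Prod>i\<in>{1..n}. W i (\<alpha> (pr n i))))"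
      unfolding SC WS by (simp add: mult_ac)
    finally show ?thesis .
  qed
  have C2: "(\<Prod>i\<in>{1..n}. u i (\<alpha> i)) * (\<Prod>i\<in>{1..n}. W i (\<alpha> (pr n i))) = u i0 (\<alpha> i0) * R (\<alpha>(i0 := 0))"
    if a: "\<alpha> \<in> box \<gamma>" for \<alpha>
  proof -
    have ale: "\<alpha> i \<le> \<gamma> i" for i using a by (simp add: box_def)
    have p1: "(\<Prod>i\<in>{1..n}. u i (\<alpha> i)) = u i0 (\<alpha> i0) * (\<Prod>i\<in>{1..n}-{i0}. u i ((\<alpha>(i0 := 0)) i))"
      by (subst prod.remove[OF _ i0n]) (auto intro!: prod.cong)
    have Wj0: "W j0 (\<alpha> i0) = pp q (m j0) (\<gamma> i0)"
    proof -
      have "W j0 (\<alpha> i0) = pp q (m j0) (\<gamma> i0 - \<alpha> i0) * pp q (m j0 + (\<gamma> i0 - \<alpha> i0)) (\<alpha> i0)"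
        by (simp add: W_def prj0 gj0)
      also have "\<dots> = pp q (m j0) (\<gamma> i0 - \<alpha> i0 + \<alpha> i0)" by (rule pp_add)
      finally show ?thesis using ale[of i0] by simp
    qed
    have p2: "(\<Prod>i\<in>{1..n}. W i (\<alpha> (pr n i))) = pp q (m j0) (\<gamma> i0) * (\<Prod>i\<in>{1..n}-{j0}. W i ((\<alpha>(i0 := 0)) (pr n i)))"
    proof -
      have "(\<Prod>i\<in>{1..n}. W i (\<alpha> (pr n i))) = W j0 (\<alpha> (pr n j0)) * (\<Prod>i\<in>{1..n}-{j0}. W i (\<alpha> (pr n i)))"
        by (rule prod.remove[OF _ j0n]) simp
      also have "(\<Prod>i\<in>{1..n}-{j0}. W i (\<alpha> (pr n i))) = (\<Prod>i\<in>{1..n}-{j0}. W i ((\<alpha>(i0 := 0)) (pr n i)))"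
      proof (rule prod.cong[OF refl])
        fix i assume i: "i \<in> {1..n}-{j0}"
        then have "pr n i \<noteq> i0" using pr_eq_sc[of i n i0] i0n by (auto simp: j0_def)
        then show "W i (\<alpha> (pr n i)) = W i ((\<alpha>(i0 := 0)) (pr n i))" by simp
      qed
      finally show ?thesis using Wj0 prj0 by simp
    qed
    show ?thesis unfolding p1 p2 R_def by (simp add: mult_ac)
  qed
  have C3: "(\<Sum>\<alpha>\<in>box \<gamma>. u i0 (\<alpha> i0) * R (\<alpha>(i0 := 0))) = 0"
  proof -
    define \<gamma>0 where "\<gamma>0 = \<gamma>(i0 := 0)"
    have fb: "finite (box \<gamma>)" by (rule finite_box[OF g])
    have "box \<gamma>0 \<subseteq> box \<gamma>"
    proof
      fix \<alpha> assume a0: "\<alpha> \<in> box \<gamma>0"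
      show "\<alpha> \<in> box \<gamma>" unfolding box_def
      proof (intro CollectI allI)
        fix i
        have "\<alpha> i \<le> \<gamma>0 i" using a0 unfolding box_def by blast
        then show "\<alpha> i \<le> \<gamma> i" by (cases "i = i0") (auto simp: \<gamma>0_def)
      qed
    qed
    then have fb0: "finite (box \<gamma>0)" using fb by (rule finite_subset)
    have "(\<Sum>\<alpha>\<in>box \<gamma>. u i0 (\<alpha> i0) * R (\<alpha>(i0 := 0))) = (\<Sum>(\<beta>, a)\<in>box \<gamma>0 \<times> {..\<gamma> i0}. u i0 a * R \<beta>)"
    proof (rule sum.reindex_bij_witness[where i="\<lambda>(\<beta>, a). \<beta>(i0 := a)" and j="\<lambda>\<alpha>. (\<alpha>(i0 := 0), \<alpha> i0)"])
      fix \<alpha> assume "\<alpha> \<in> box \<gamma>"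
      then show "(case (\<alpha>(i0 := 0), \<alpha> i0) of (\<beta>, a) \<Rightarrow> \<beta>(i0 := a)) = \<alpha>" by auto
      show "(\<alpha>(i0 := 0), \<alpha> i0) \<in> box \<gamma>0 \<times> {..\<gamma> i0}" using \<open>\<alpha> \<in> box \<gamma>\<close> by (auto simp: box_def \<gamma>0_def)
      show "(case (\<alpha>(i0 := 0), \<alpha> i0) of (\<beta>, a) \<Rightarrow> u i0 a * R \<beta>) = u i0 (\<alpha> i0) * R (\<alpha>(i0 := 0))" by simp
    next
      fix p assume p: "p \<in> box \<gamma>0 \<times> {..\<gamma> i0}"
      obtain \<beta> a where pe: "p = (\<beta>, a)" by (cases p)
      have b0: "\<beta> i0 = 0" using p pe by (auto simp: box_def \<gamma>0_def dest: spec[of _ i0])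
      show "(case (case p of (\<beta>, a) \<Rightarrow> \<beta>(i0 := a)) of \<alpha> \<Rightarrow> (\<alpha>(i0 := 0), \<alpha> i0)) = p"
        using b0 pe by auto
      show "(case p of (\<beta>, a) \<Rightarrow> \<beta>(i0 := a)) \<in> box \<gamma>"
        using p pe by (auto simp: box_def \<gamma>0_def split: if_splits)
    qed
    also have "\<dots> = (\<Sum>\<beta>\<in>box \<gamma>0. R \<beta> * (\<Sum>a\<in>{..\<gamma> i0}. u i0 a))"
      by (simp add: sum.cartesian_product[symmetric] sum_distrib_left mult.commute)
    also have "(\<Sum>a\<in>{..\<gamma> i0}. u i0 a) = 0"
      unfolding u_def by (rule qsum_zero[OF qp i0(3)])
    finally show ?thesis by (simp only: mult_zero_right sum.neutral_const)
  qed
  have "(\<Sum>\<alpha>\<in>box \<gamma>. Fterm q z n m mu (sz n \<alpha>) (\<lambda>i. \<gamma> i - \<alpha> i) \<alpha>)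
      = (\<Sum>\<alpha>\<in>box \<gamma>. ((if mu = tau then 1 else 0) * z^(\<gamma> n)) * (u i0 (\<alpha> i0) * R (\<alpha>(i0 := 0))))"
  proof (rule sum.cong[OF refl])
    fix \<alpha> assume a: "\<alpha> \<in> box \<gamma>"
    show "Fterm q z n m mu (sz n \<alpha>) (\<lambda>i. \<gamma> i - \<alpha> i) \<alpha> = ((if mu = tau then 1 else 0) * z^(\<gamma> n)) * (u i0 (\<alpha> i0) * R (\<alpha>(i0 := 0)))"
      unfolding C1[OF a] C2[OF a] by (simp only: mult.assoc)
  qed
  also have "\<dots> = 0" by (simp add: sum_distrib_left[symmetric] C3)
  finally show ?thesis .
qed


lemma compPM:
  fixes q z :: "'a::field"
  assumes n: "1 \<le> n"
  shows "q^(2*k) * comp_op (Qplus n q z k) (Qminus n q z j) m mu = (\<Sum>\<alpha>'\<in>comps n j. \<Sum>\<alpha>\<in>comps n k. Fterm q z n m mu k \<alpha>' \<alpha>)"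
proof -
  have "comp_op (Qplus n q z k) (Qminus n q z j) m mu = (\<Sum>\<alpha>'\<in>comps n j. cM q z n \<alpha>' * comp_op (Qplus n q z k) (ws (sigM n \<alpha>') (kapM q n \<alpha>')) m mu)"
    unfolding Qminus_ws[OF n] by (rule comp_sum_right) (auto simp: finite_comps finitary_ws)
  also have "\<dots> = (\<Sum>\<alpha>'\<in>comps n j. cM q z n \<alpha>' * (kapM q n \<alpha>' m * (\<Sum>\<alpha>\<in>comps n k. ((-1)^k * cP q z n \<alpha>) * ws (sigP n \<alpha>) (kapP q n \<alpha>) (sigM n \<alpha>' m) mu)))"
    unfolding comp_ws_right Qplus_ws[OF n] ..
  finally show ?thesis
    by (simp add: Fterm_def sum_distrib_left)
qed

lemma reindex_main:
  fixes F :: "nat \<Rightarrow> (nat \<Rightarrow> nat) \<Rightarrow> (nat \<Rightarrow> nat) \<Rightarrow> 'a::comm_ring_1"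
  shows "(\<Sum>k\<in>{0..r}. \<Sum>\<alpha>'\<in>comps n (r-k). \<Sum>\<alpha>\<in>comps n k. F k \<alpha>' \<alpha>)
       = (\<Sum>\<gamma>\<in>comps n r. \<Sum>\<alpha>\<in>box \<gamma>. F (sz n \<alpha>) (\<lambda>i. \<gamma> i - \<alpha> i) \<alpha>)"
proof -
  have "(\<Sum>k\<in>{0..r}. \<Sum>\<alpha>'\<in>comps n (r-k). \<Sum>\<alpha>\<in>comps n k. F k \<alpha>' \<alpha>)
      = (\<Sum>k\<in>{0..r}. \<Sum>p\<in>comps n (r-k) \<times> comps n k. F k (fst p) (snd p))"
    by (rule sum.cong[OF refl]) (simp add: sum.cartesian_product split_def)
  also have "\<dots> = (\<Sum>x\<in>Sigma {0..r} (\<lambda>k. comps n (r-k) \<times> comps n k). F (fst x) (fst (snd x)) (snd (snd x)))"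
    by (subst sum.Sigma) (auto simp: finite_comps split_def)
  also have "\<dots> = (\<Sum>y\<in>Sigma (comps n r) box. F (sz n (snd y)) (\<lambda>i. fst y i - snd y i) (snd y))"
  proof (rule sum.reindex_bij_witness[where j="\<lambda>x. ((\<lambda>i. fst (snd x) i + snd (snd x) i), snd (snd x))"
        and i="\<lambda>y. (sz n (snd y), ((\<lambda>i. fst y i - snd y i), snd y))"])
    fix x assume x: "x \<in> Sigma {0..r} (\<lambda>k. comps n (r-k) \<times> comps n k)"
    obtain k \<alpha>' \<alpha> where xe: "x = (k, \<alpha>', \<alpha>)" by (cases x) auto
    have k: "k \<le> r" and a': "\<alpha>' \<in> comps n (r-k)" and a: "\<alpha> \<in> comps n k" using x xe by auto
    have szk: "sz n \<alpha> = k" using comps_sum[OF a] by (simp add: sz_def)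
    show "(sz n (snd ((\<lambda>i. fst (snd x) i + snd (snd x) i), snd (snd x))),
           (\<lambda>i. fst ((\<lambda>i. fst (snd x) i + snd (snd x) i), snd (snd x)) i - snd ((\<lambda>i. fst (snd x) i + snd (snd x) i), snd (snd x)) i),
           snd ((\<lambda>i. fst (snd x) i + snd (snd x) i), snd (snd x))) = x"
      using xe szk by simp
    have "(\<lambda>i. \<alpha>' i + \<alpha> i) \<in> comps n r"
    proof (rule comps_intro)
      fix i assume "i = 0 \<or> n < i"
      then show "\<alpha>' i + \<alpha> i = 0" using comps_out[OF a'] comps_out[OF a] by simp
    next
      show "(\<Sum>i=1..n. \<alpha>' i + \<alpha> i) = r" using comps_sum[OF a'] comps_sum[OF a] k by (simp add: sum.distrib)
    qed
    moreover have "\<alpha> \<in> box (\<lambda>i. \<alpha>' i + \<alpha> i)" by (simp add: box_def)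
    ultimately show "((\<lambda>i. fst (snd x) i + snd (snd x) i), snd (snd x)) \<in> Sigma (comps n r) box" using xe by simp
    show "F (sz n (snd ((\<lambda>i. fst (snd x) i + snd (snd x) i), snd (snd x))))
          (\<lambda>i. fst ((\<lambda>i. fst (snd x) i + snd (snd x) i), snd (snd x)) i - snd ((\<lambda>i. fst (snd x) i + snd (snd x) i), snd (snd x)) i)
          (snd ((\<lambda>i. fst (snd x) i + snd (snd x) i), snd (snd x))) = F (fst x) (fst (snd x)) (snd (snd x))"
      using xe szk by simp
  next
    fix y assume y: "y \<in> Sigma (comps n r) box"
    obtain \<gamma> \<alpha> where ye: "y = (\<gamma>, \<alpha>)" by (cases y) auto
    have g: "\<gamma> \<in> comps n r" and a: "\<alpha> \<in> box \<gamma>" using y ye by auto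
    have ale: "\<alpha> i \<le> \<gamma> i" for i using a by (simp add: box_def)
    show "((\<lambda>i. fst (snd (sz n (snd y), (\<lambda>i. fst y i - snd y i), snd y)) i + snd (snd (sz n (snd y), (\<lambda>i. fst y i - snd y i), snd y)) i),
          snd (snd (sz n (snd y), (\<lambda>i. fst y i - snd y i), snd y))) = y"
      using ye ale by (simp add: fun_eq_iff)
    have szle: "sz n \<alpha> \<le> r" using comps_sum[OF g] unfolding sz_def by (metis ale sum_mono)
    have "(\<lambda>i. \<gamma> i - \<alpha> i) \<in> comps n (r - sz n \<alpha>)"
    proof (rule comps_intro)
      fix i assume "i = 0 \<or> n < i"
      then show "\<gamma> i - \<alpha> i = 0" using comps_out[OF g] by simp
    next
      show "(\<Sum>i=1..n. \<gamma> i - \<alpha> i) = r - sz n \<alpha>"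
        using comps_sum[OF g] by (simp add: sum_subtractf_nat ale sz_def)
    qed
    moreover have "\<alpha> \<in> comps n (sz n \<alpha>)"
    proof (rule comps_intro)
      fix i assume "i = 0 \<or> n < i"
      then show "\<alpha> i = 0" using comps_out[OF g] ale[of i] by simp
    qed (simp add: sz_def)
    ultimately show "(sz n (snd y), (\<lambda>i. fst y i - snd y i), snd y) \<in> Sigma {0..r} (\<lambda>k. comps n (r-k) \<times> comps n k)"
      using ye szle by simp
  qed
  also have "\<dots> = (\<Sum>\<gamma>\<in>comps n r. \<Sum>\<alpha>\<in>box \<gamma>. F (sz n \<alpha>) (\<lambda>i. \<gamma> i - \<alpha> i) \<alpha>)"
    by (subst sum.Sigma) (auto simp: finite_comps finite_box split_def)
  finally show ?thesis .
qed

lemma core_zero: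
  fixes q z :: "'a::field"
  assumes n: "1 \<le> n" and qp: "\<forall>j\<ge>1. q ^ j \<noteq> 1" and r: "1 \<le> r" and rn: "r < n"
  shows "(\<Sum>k\<in>{0..r}. q^(2*k) * comp_op (Qplus n q z k) (Qminus n q z (r-k)) m mu) = 0"
proof -
  have "(\<Sum>k\<in>{0..r}. q^(2*k) * comp_op (Qplus n q z k) (Qminus n q z (r-k)) m mu)
      = (\<Sum>k\<in>{0..r}. \<Sum>\<alpha>'\<in>comps n (r-k). \<Sum>\<alpha>\<in>comps n k. Fterm q z n m mu k \<alpha>' \<alpha>)"
    by (simp add: compPM[OF n])
  also have "\<dots> = (\<Sum>\<gamma>\<in>comps n r. \<Sum>\<alpha>\<in>box \<gamma>. Fterm q z n m mu (sz n \<alpha>) (\<lambda>i. \<gamma> i - \<alpha> i) \<alpha>)"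
    by (rule reindex_main)
  also have "\<dots> = 0"
    by (rule sum.neutral) (auto intro: gamma_zero[OF n qp _ r rn])
  finally show ?thesis .
qed


lemma D_eq:
  fixes q z :: "'a::field"
  assumes n: "1 \<le> n" and q0: "q \<noteq> 0" and qp: "\<forall>j\<ge>1. q ^ j \<noteq> 1"
  shows "r < n \<Longrightarrow> Dcoef n q z r = scale_op (inverse (q ^ (2 * r))) (Qminus n q z r)"
proof (induction r rule: less_induct)
  case (less r)
  show ?case
  proof (cases "r = 0")
    case True
    then show ?thesis by (simp add: Dcoef_0 Qminus_0[OF n] scale_op_def)
  next
    case False
    then have r: "1 \<le> r" by simp
    show ?thesis
    proof (intro ext)
      fix m mu
      define C where "C k = comp_op (Qplus n q z k) (Qminus n q z (r-k)) m mu" for k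
      have IH: "Dcoef n q z (r-k) = scale_op (inverse (q ^ (2 * (r-k)))) (Qminus n q z (r-k))" if "k \<in> {1..r}" for k
        using less.IH[of "r-k"] less.prems that by simp
      have "Dcoef n q z r m mu = - (\<Sum>k\<in>{1..r}. comp_op (Qplus n q z k) (Dcoef n q z (r-k)) m mu)"
        by (rule Dcoef_rec[OF n r])
      also have "\<dots> = - (\<Sum>k\<in>{1..r}. inverse (q ^ (2 * r)) * (q^(2*k) * C k))"
      proof -
        have "comp_op (Qplus n q z k) (Dcoef n q z (r-k)) m mu = inverse (q ^ (2 * r)) * (q^(2*k) * C k)" if k: "k \<in> {1..r}" for k
        proof -
          have kr: "k \<le> r" using k by simp
          have e: "2 * (r-k) + 2 * k = 2 * r" using kr by arith
          have "q ^ (2 * r) = q ^ (2 * (r-k)) * q^(2*k)" unfolding power_add[symmetric] e ..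
          then have "inverse (q ^ (2 * (r-k))) = inverse (q ^ (2 * r)) * q^(2*k)" using q0 by (simp add: field_simps)
          then show ?thesis unfolding IH[OF k] comp_scale_right C_def by simp
        qed
        then show ?thesis by simp
      qed
      also have "\<dots> = inverse (q ^ (2 * r)) * (- (\<Sum>k\<in>{1..r}. q^(2*k) * C k))"
        by (simp add: sum_distrib_left)
      also have "- (\<Sum>k\<in>{1..r}. q^(2*k) * C k) = Qminus n q z r m mu"
      proof -
        have ins: "{0..r} = insert 0 {1..r}" by auto
        have "(\<Sum>k\<in>{0..r}. q^(2*k) * C k) = 0"
          unfolding C_def by (rule core_zero[OF n qp r less.prems])
        moreover have "(\<Sum>k\<in>{0..r}. q^(2*k) * C k) = C 0 + (\<Sum>k\<in>{1..r}. q^(2*k) * C k)"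
          unfolding ins by (subst sum.insert) auto
        moreover have "C 0 = Qminus n q z r m mu"
        proof -
          have h: "comp_op id_op (Qminus n q z r) m = Qminus n q z r m"
            using finitary_Qminus[OF n, of q z r] by (intro comp_id_left) (simp add: finitary_def)
          show ?thesis unfolding C_def Qplus_0[OF n] using fun_cong[OF h, of mu] by simp
        qed
        ultimately show ?thesis by (simp add: add_eq_0_iff)
      qed
      finally show "Dcoef n q z r m mu = scale_op (inverse (q ^ (2 * r))) (Qminus n q z r) m mu"
        by (simp add: scale_op_def)
    qed
  qed
qed

theorem mainTheorem8:
  fixes q z :: "'a::field" and n :: nat
  assumes "n \<ge> 1"
    and "q \<noteq> 0"
    and "\<forall>j\<ge>1. q ^ j \<noteq> 1"
  shows "(\<forall>r. \<forall>m\<in>fock n.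
            conv_op (Qplus n q z) (Dcoef n q z) r m = (if r = 0 then id_op else zero_op) m \<and>
            conv_op (Dcoef n q z) (Qplus n q z) r m = (if r = 0 then id_op else zero_op) m)
       \<and> (\<forall>r<n. \<forall>m\<in>fock n.
            Dcoef n q z r m = scale_op (inverse (q ^ (2 * r))) (Qminus n q z r) m)"
proof (intro conjI allI ballI impI)
  fix r m
  show "conv_op (Qplus n q z) (Dcoef n q z) r m = (if r = 0 then id_op else zero_op) m"
    unfolding conv_PD[OF assms(1)] ..
  show "conv_op (Dcoef n q z) (Qplus n q z) r m = (if r = 0 then id_op else zero_op) m"
    unfolding conv_DP[OF assms(1)] ..
next
  fix r m assume "r < n"
  show "Dcoef n q z r m = scale_op (inverse (q ^ (2 * r))) (Qminus n q z r) m"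
    unfolding D_eq[OF assms \<open>r < n\<close>] ..
qed


end
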